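(* For every $(K,\Sigma)\in\Omega$, with the Gaussian linear policy $\pi(u|x)=\mathcal N(-Kx,\Sigma)$ and $x_t$ following the dynamics $x_{t+1}=(A+w_t^xC)x_t+(B+w_t^uD)u_t$, one has $$f(K,\Sigma)=\mathbb{E}_{x_0\sim\mathcal D}[C_{K,\Sigma}(x_0)]=P_K\mu+q_{K,\Sigma},$$ where $\mu=\mathbb{E}_{x_0\sim\mathcal D}[x_0^2]$, the scalar $P_K$ satisfies $$P_K=Q+K^\top RK+\gamma P_K\big(A^2+C^2+K^\top(B^\top B+D^\top D)K-2ABK\big),$$ and $$q_{K,\Sigma}=\frac{\mathrm{Tr}\big(\Sigma(R+\gamma P_K(B^\top B+D^\top D))\big)-\frac{\tau}{2}\big(n+\log((2\pi)^n\det\Sigma)\big)}{1-\gamma}.$$ Consequently, the entropy-regularized control problem over such policies is the optimization problem $\min_{(K,\Sigma)\in\Omega}f(K,\Sigma)$.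
   Context: Let $n\ge1$, $A,C\in\mathbb{R}$, $B\in\mathbb{R}^{1\times n}$ (row vector), $D\in\mathbb{R}^{n\times n}$, $Q\in\mathbb{R}$, $R\in\mathbb{R}^{n\times n}$ symmetric, $\gamma\in(0,1)$, $\tau>0$. State $x_t\in\mathbb{R}$, control $u_t\in\mathbb{R}^n$, dynamics $x_{t+1}=(A+w_t^xC)x_t+(B+w_t^uD)u_t$ with white noises $w_t^x\in\mathbb{R}$, $w_t^u\in\mathbb{R}^{1\times n}$, independent across time, of each other and of the control randomization, $\mathbb{E}w_t^x=0$, $\mathbb{E}(w_t^x)^2=1$, $\mathbb{E}w_t^u=0$, $\mathbb{E}[(w_t^u)^\top w_t^u]=I_n$. For $K\in\mathbb{R}^n$ (column vector) and symmetric positive definite $\Sigma$, the policy $\pi_{K,\Sigma}$ draws $u_t\sim\mathcal N(-Kx_t,\Sigma)$. Let $V_K=A^2+C^2+K^\top(B^\top B+D^\top D)K-2ABK$ and $\Omega=\{(K,\Sigma):K\in\mathbb{R}^n,\ \Sigma\in\mathbb{R}^{n\times n},\ \Sigma=\Sigma^\top\succ0,\ \gamma V_K<1\}$. For a deterministic initial state $x_0$, $C_{K,\Sigma}(x_0)=\mathbb{E}\big[\sum_{t=0}^\infty\gamma^t(Qx_t^2+u_t^\top Ru_t+\tau\log\pi_{K,\Sigma}(u_t|x_t))\big]$ with $u_t\sim\mathcal N(-Kx_t,\Sigma)$, where $\pi_{K,\Sigma}(\cdot|x)$ is the Gaussian density; $\mathcal D$ is the initial state distribution. *)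

theory Defs
  imports "HOL-Probability.Probability"
begin

text \<open>Density of the multivariate Gaussian N(m, S) on real^'n (S symmetric positive definite).\<close>
definition gauss_pdf :: "real^'n^'n \<Rightarrow> real^'n \<Rightarrow> real^'n \<Rightarrow> real" where
  "gauss_pdf S m u =
     exp (- (1/2) * ((u - m) \<bullet> (matrix_inv S *v (u - m))))
       / sqrt ((2 * pi) ^ CARD('n) * det S)"

definition sym_posdef :: "real^'n^'n \<Rightarrow> bool" where
  "sym_posdef S \<longleftrightarrow> transpose S = S \<and> (\<forall>v. v \<noteq> 0 \<longrightarrow> v \<bullet> (S *v v) > 0)"

text \<open>Outer product B^T B of a row vector B.\<close>
definition outer :: "real^'n \<Rightarrow> real^'n \<Rightarrow> real^'n^'n" where
  "outer a b = (\<chi> i j. a $ i * b $ j)"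

text \<open>V_K = A^2 + C^2 + K^T (B^T B + D^T D) K - 2 A B K\<close>
definition V_K :: "real \<Rightarrow> real \<Rightarrow> real^'n \<Rightarrow> real^'n^'n \<Rightarrow> real^'n \<Rightarrow> real" where
  "V_K A C B D K = A^2 + C^2 + K \<bullet> ((outer B B + transpose D ** D) *v K) - 2 * A * (B \<bullet> K)"

text \<open>Omega: admissible policy parameters.\<close>
definition Omega :: "real \<Rightarrow> real \<Rightarrow> real \<Rightarrow> real^'n \<Rightarrow> real^'n^'n \<Rightarrow> ((real^'n) \<times> (real^'n^'n)) set" where
  "Omega \<gamma> A C B D = {(K, S). sym_posdef S \<and> \<gamma> * V_K A C B D K < 1}"

text \<open>Control u_t = -K x_t + xi_t, where xi_t ~ N(0, Sigma) is the policy randomization,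
  so that u_t ~ N(-K x_t, Sigma) given x_t.\<close>
primrec ctrl_state ::
  "real \<Rightarrow> real \<Rightarrow> real^'n \<Rightarrow> real^'n^'n \<Rightarrow> real^'n \<Rightarrow>
   (nat \<Rightarrow> 'a \<Rightarrow> real) \<Rightarrow> (nat \<Rightarrow> 'a \<Rightarrow> real^'n) \<Rightarrow> (nat \<Rightarrow> 'a \<Rightarrow> real^'n) \<Rightarrow>
   real \<Rightarrow> nat \<Rightarrow> 'a \<Rightarrow> real" where
  "ctrl_state A C B D K wx wu xi x0 0 \<omega> = x0"
| "ctrl_state A C B D K wx wu xi x0 (Suc t) \<omega> =
     (let x = ctrl_state A C B D K wx wu xi x0 t \<omega>;
          u = xi t \<omega> - x *\<^sub>R K
      in (A + wx t \<omega> * C) * x + (B + wu t \<omega> v* D) \<bullet> u)"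

definition ctrl_input ::
  "real \<Rightarrow> real \<Rightarrow> real^'n \<Rightarrow> real^'n^'n \<Rightarrow> real^'n \<Rightarrow>
   (nat \<Rightarrow> 'a \<Rightarrow> real) \<Rightarrow> (nat \<Rightarrow> 'a \<Rightarrow> real^'n) \<Rightarrow> (nat \<Rightarrow> 'a \<Rightarrow> real^'n) \<Rightarrow>
   real \<Rightarrow> nat \<Rightarrow> 'a \<Rightarrow> real^'n" where
  "ctrl_input A C B D K wx wu xi x0 t \<omega> =
     xi t \<omega> - ctrl_state A C B D K wx wu xi x0 t \<omega> *\<^sub>R K"

text \<open>C_{K,Sigma}(x0): expected discounted entropy-regularized cost from deterministic x0.\<close>
definition ctrl_cost ::
  "'a measure \<Rightarrow> real \<Rightarrow> real \<Rightarrow> real^'n \<Rightarrow> real^'n^'n \<Rightarrow> real \<Rightarrow> real^'n^'n \<Rightarrow> real \<Rightarrow> real \<Rightarrow>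
   real^'n \<Rightarrow> real^'n^'n \<Rightarrow>
   (nat \<Rightarrow> 'a \<Rightarrow> real) \<Rightarrow> (nat \<Rightarrow> 'a \<Rightarrow> real^'n) \<Rightarrow> (nat \<Rightarrow> 'a \<Rightarrow> real^'n) \<Rightarrow> real \<Rightarrow> real" where
  "ctrl_cost M A C B D Q R \<gamma> \<tau> K S wx wu xi x0 =
     integral\<^sup>L M (\<lambda>\<omega>. \<Sum>t. \<gamma> ^ t *
        (let x = ctrl_state A C B D K wx wu xi x0 t \<omega>;
             u = ctrl_input A C B D K wx wu xi x0 t \<omega>
         in Q * x^2 + u \<bullet> (R *v u) + \<tau> * ln (gauss_pdf S (- (x *\<^sub>R K)) u)))"

text \<open>Generated sigma-algebras of all noise variables, indexed by (time, component):
  component 0 = w^x_t, 1 = w^u_t, 2 = policy randomization xi_t.  Mutual independence of the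
  whole family is expressed by indep_sets over UNIV x {0,1,2}.\<close>
definition noise_events ::
  "'a measure \<Rightarrow> (nat \<Rightarrow> 'a \<Rightarrow> real) \<Rightarrow> (nat \<Rightarrow> 'a \<Rightarrow> real^'n) \<Rightarrow> (nat \<Rightarrow> 'a \<Rightarrow> real^'n) \<Rightarrow>
   nat \<times> nat \<Rightarrow> 'a set set" where
  "noise_events M wx wu xi = (\<lambda>(t, k).
     if k = 0 then {wx t -` A \<inter> space M | A. A \<in> sets (borel :: real measure)}
     else if k = 1 then {wu t -` A \<inter> space M | A. A \<in> sets (borel :: (real^'n) measure)}
     else {xi t -` A \<inter> space M | A. A \<in> sets (borel :: (real^'n) measure)})"

end

theory Submission
  imports Defs
begin

lemma abs_sinh_le: "\<bar>sinh (z::real)\<bar> \<le> \<bar>z\<bar> * cosh z"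
proof -
  have pos: "sinh z \<le> z * cosh z" if "z \<ge> 0" for z :: real
  proof (cases "z = 0")
    case True then show ?thesis by simp
  next
    case False
    with that have "0 < z" by simp
    have d: "\<And>x. 0 \<le> x \<Longrightarrow> x \<le> z \<Longrightarrow> DERIV sinh x :> cosh x"
      by (auto intro!: derivative_eq_intros)
    from MVT2[OF \<open>0 < z\<close> d] obtain e where e: "0 < e" "e < z" "sinh z - sinh 0 = (z - 0) * cosh e"
      by blast
    have "cosh e \<le> cosh z" using e by (subst cosh_real_nonneg_le_iff) auto
    then show ?thesis using e \<open>0 < z\<close> by (simp add: mult_left_mono)
  qed
  show ?thesis
  proof (cases "z \<ge> 0")
    case True
    then have "0 \<le> sinh z" by simp
    then show ?thesis using pos[OF True] True by simp
  next
    case False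
    then have "sinh z \<le> 0" by simp
    moreover have "sinh (-z) \<le> (-z) * cosh (-z)" using pos[of "-z"] False by simp
    ultimately show ?thesis using False by simp
  qed
qed

lemma cosh_minus_one_le: "cosh (z::real) - 1 \<le> z^2 * cosh z"
proof -
  have pos: "cosh z - 1 \<le> z^2 * cosh z" if "z \<ge> 0" for z :: real
  proof (cases "z = 0")
    case True then show ?thesis by simp
  next
    case False
    with that have "0 < z" by simp
    have d: "\<And>x. 0 \<le> x \<Longrightarrow> x \<le> z \<Longrightarrow> DERIV cosh x :> sinh x"
      by (auto intro!: derivative_eq_intros)
    from MVT2[OF \<open>0 < z\<close> d] obtain e where e: "0 < e" "e < z" "cosh z - cosh 0 = (z - 0) * sinh e"
      by blast
    have "sinh e \<le> e * cosh e" using abs_sinh_le[of e] e by simp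
    also have "\<dots> \<le> z * cosh z"
      using e by (intro mult_mono) (auto simp: cosh_real_nonneg_le_iff)
    finally have "z * sinh e \<le> z * (z * cosh z)" using \<open>0<z\<close> by (simp add: mult_left_mono)
    then show ?thesis using e by (simp add: power2_eq_square)
  qed
  show ?thesis
    using pos[of "\<bar>z\<bar>"] by (cases "z \<ge> 0") auto
qed

lemma tk_at0: "filterlim (\<lambda>k. inverse (real (Suc k))) (at (0::real)) sequentially"
  unfolding filterlim_at using LIMSEQ_inverse_real_of_nat by auto

lemma tk2_at0: "filterlim (\<lambda>k. (inverse (real (Suc k)))^2) (at (0::real)) sequentially"
proof -
  have "(\<lambda>k. (inverse (real (Suc k)))^2) \<longlonglongrightarrow> 0^2"
    by (intro tendsto_intros LIMSEQ_inverse_real_of_nat)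
  then show ?thesis unfolding filterlim_at by auto
qed

lemma lim_sinh_quot: "(\<lambda>k. (exp (inverse (real (Suc k)) * a) - exp (- (inverse (real (Suc k)) * a))) / (2 * inverse (real (Suc k)))) \<longlonglongrightarrow> (a::real)"
proof -
  have "DERIV (\<lambda>x. (exp (x * a) - exp (- (x * a))) / 2) 0 :> a"
    by (auto intro!: derivative_eq_intros)
  then have "((\<lambda>h. (exp (h * a) - exp (- (h * a))) / 2 / h) \<longlongrightarrow> a) (at 0)"
    unfolding DERIV_def by simp
  from filterlim_compose[OF this tk_at0] show ?thesis
    by (simp add: field_simps)
qed

lemma lim_cosh_quot: "(\<lambda>k. (exp (inverse (real (Suc k)) * a) + exp (- (inverse (real (Suc k)) * a)) - 2) / (inverse (real (Suc k)))^2) \<longlonglongrightarrow> (a::real)^2"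
proof -
  define t where "t k = inverse (real (Suc k))" for k
  have "(\<lambda>k. 2 * ((exp (t k * (a/2)) - exp (- (t k * (a/2)))) / (2 * t k))) \<longlonglongrightarrow> 2 * (a/2)"
    unfolding t_def by (intro tendsto_intros lim_sinh_quot)
  then have "(\<lambda>k. (2 * ((exp (t k * (a/2)) - exp (- (t k * (a/2)))) / (2 * t k)))^2) \<longlonglongrightarrow> (2 * (a/2))^2"
    by (rule tendsto_power)
  moreover have "(2 * ((exp (t k * (a/2)) - exp (- (t k * (a/2)))) / (2 * t k)))^2
      = (exp (t k * a) + exp (- (t k * a)) - 2) / (t k)^2" for k
  proof -
    have tk: "t k \<noteq> 0" unfolding t_def by simp
    have e1: "exp (t k * a) = exp (t k * (a/2)) * exp (t k * (a/2))"
      by (simp add: exp_add[symmetric])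
    have e2: "exp (- (t k * a)) = exp (- (t k * (a/2))) * exp (- (t k * (a/2)))"
      by (simp add: exp_add[symmetric])
    have e3: "exp (t k * (a/2)) * exp (- (t k * (a/2))) = 1"
      by (simp add: exp_add[symmetric])
    show ?thesis using tk unfolding e1 e2
      by (simp add: exp_minus field_simps power2_eq_square)
  qed
  ultimately show ?thesis unfolding t_def by simp
qed

lemma lim_mgf_quot: "(\<lambda>k. (2 * exp ((inverse (real (Suc k)))^2 * v / 2) - 2) / (inverse (real (Suc k)))^2) \<longlonglongrightarrow> (v::real)"
proof -
  have "DERIV (\<lambda>x. exp (x * v / 2)) 0 :> v / 2"
    by (auto intro!: derivative_eq_intros)
  then have "((\<lambda>h. (exp (h * v / 2) - 1) / h) \<longlongrightarrow> v / 2) (at 0)"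
    unfolding DERIV_def by simp
  from filterlim_compose[OF this tk2_at0]
  have "(\<lambda>k. (exp ((inverse (real (Suc k)))^2 * v / 2) - 1) / (inverse (real (Suc k)))^2) \<longlonglongrightarrow> v / 2" .
  then have "(\<lambda>k. 2 * ((exp ((inverse (real (Suc k)))^2 * v / 2) - 1) / (inverse (real (Suc k)))^2)) \<longlonglongrightarrow> 2 * (v / 2)"
    by (rule tendsto_mult_left)
  then show ?thesis by (simp add: field_simps)
qed

lemma exp_abs_le: "exp \<bar>y::real\<bar> \<le> exp y + exp (- y)"
  by (cases "y \<ge> 0") (auto simp: add_increasing2 add_increasing)

lemma abs_le_exp2: "\<bar>y::real\<bar> \<le> exp (2*y) + exp (- (2*y))"
proof -
  have "\<bar>y\<bar> \<le> exp \<bar>y\<bar>" using exp_ge_add_one_self[of "\<bar>y\<bar>"] by linarith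
  also have "\<dots> \<le> exp \<bar>2*y\<bar>" by simp
  also have "\<dots> \<le> exp (2*y) + exp (- (2*y))" by (rule exp_abs_le)
  finally show ?thesis .
qed

lemma sq_le_exp: "(y::real)^2 \<le> 2 * exp \<bar>y\<bar>"
proof -
  have "1 + \<bar>y\<bar> + \<bar>y\<bar>^2/2 \<le> exp \<bar>y\<bar>" by (rule exp_lower_Taylor_quadratic) simp
  then show ?thesis by simp
qed

lemma cosh_le_exp_abs: "cosh (y::real) \<le> exp \<bar>y\<bar>"
  unfolding cosh_def by (cases "y \<ge> 0") auto

lemma cosh_mono_t: assumes "0 \<le> t" "t \<le> (1::real)" shows "cosh (t * y) \<le> cosh y"
proof -
  have "cosh (t * y) = cosh \<bar>t * y\<bar>" by simp
  also have "\<dots> \<le> cosh \<bar>y\<bar>" using assms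
    by (subst cosh_real_nonneg_le_iff) (auto simp: abs_mult mult_left_le_one_le)
  finally show ?thesis by simp
qed

lemma mgf_moments:
  fixes M :: "'a measure" and Y :: "'a \<Rightarrow> real"
  assumes P: "prob_space M" and Ym[measurable]: "Y \<in> borel_measurable M"
    and int: "\<And>c. integrable M (\<lambda>\<omega>. exp (c * Y \<omega>))"
    and mgf: "\<And>c. (\<integral>\<omega>. exp (c * Y \<omega>) \<partial>M) = exp (c^2 * v / 2)"
  shows "integrable M Y \<and> (\<integral>\<omega>. Y \<omega> \<partial>M) = 0 \<and> integrable M (\<lambda>\<omega>. (Y \<omega>)^2) \<and> (\<integral>\<omega>. (Y \<omega>)^2 \<partial>M) = v"
proof -
  interpret prob_space M by (rule P)
  define t where "t k = inverse (real (Suc k))" for k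
  have t0: "0 < t k" and t1: "t k \<le> 1" for k unfolding t_def by (auto simp: field_simps)
  define W where "W \<omega> = exp (2 * Y \<omega>) + exp (- (2 * Y \<omega>))" for \<omega>
  have intW: "integrable M W" unfolding W_def
    using int[of 2] int[of "-2"] by (intro Bochner_Integration.integrable_add) auto
  have Wge: "exp (2 * \<bar>Y \<omega>\<bar>) \<le> W \<omega>" for \<omega>
    unfolding W_def using exp_abs_le[of "2 * Y \<omega>"] by (simp add: abs_mult)
  define s where "s k \<omega> = (exp (t k * Y \<omega>) - exp (- (t k * Y \<omega>))) / (2 * t k)" for k \<omega>
  define h where "h k \<omega> = (exp (t k * Y \<omega>) + exp (- (t k * Y \<omega>)) - 2) / (t k)^2" for k \<omega>
  have sbound: "norm (s k \<omega>) \<le> W \<omega>" for k \<omega>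
  proof -
    have "s k \<omega> = sinh (t k * Y \<omega>) / t k" unfolding s_def sinh_def by (simp add: field_simps)
    then have "\<bar>s k \<omega>\<bar> = \<bar>sinh (t k * Y \<omega>)\<bar> / t k" using t0[of k] by simp
    also have "\<dots> \<le> \<bar>t k * Y \<omega>\<bar> * cosh (t k * Y \<omega>) / t k"
      using t0[of k] abs_sinh_le by (intro divide_right_mono) auto
    also have "\<dots> = \<bar>Y \<omega>\<bar> * cosh (t k * Y \<omega>)" using t0[of k] by (simp add: abs_mult)
    also have "\<dots> \<le> exp \<bar>Y \<omega>\<bar> * exp \<bar>Y \<omega>\<bar>"
    proof (rule mult_mono)
      show "\<bar>Y \<omega>\<bar> \<le> exp \<bar>Y \<omega>\<bar>" using exp_ge_add_one_self[of "\<bar>Y \<omega>\<bar>"] by linarith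
      show "cosh (t k * Y \<omega>) \<le> exp \<bar>Y \<omega>\<bar>"
        using cosh_mono_t[of "t k" "Y \<omega>"] t0[of k] t1[of k] cosh_le_exp_abs[of "Y \<omega>"] by linarith
    qed auto
    also have "\<dots> = exp (2 * \<bar>Y \<omega>\<bar>)" by (simp add: exp_add[symmetric])
    also have "\<dots> \<le> W \<omega>" by (rule Wge)
    finally show ?thesis by simp
  qed
  have hbound: "norm (h k \<omega>) \<le> 4 * W \<omega>" for k \<omega>
  proof -
    have heq: "h k \<omega> = 2 * (cosh (t k * Y \<omega>) - 1) / (t k)^2" unfolding h_def cosh_def using t0[of k] by (simp add: field_simps)
    have "0 \<le> cosh (t k * Y \<omega>) - 1" using cosh_real_ge_1 by simp
    then have "\<bar>h k \<omega>\<bar> = 2 * (cosh (t k * Y \<omega>) - 1) / (t k)^2" using heq by simp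
    also have "\<dots> \<le> 2 * ((t k * Y \<omega>)^2 * cosh (t k * Y \<omega>)) / (t k)^2"
      using cosh_minus_one_le[of "t k * Y \<omega>"] by (intro divide_right_mono) auto
    also have "\<dots> = 2 * ((Y \<omega>)^2 * cosh (t k * Y \<omega>))" using t0[of k] by (simp add: power_mult_distrib)
    also have "\<dots> \<le> 2 * ((2 * exp \<bar>Y \<omega>\<bar>) * exp \<bar>Y \<omega>\<bar>)"
    proof -
      have "(Y \<omega>)^2 * cosh (t k * Y \<omega>) \<le> (2 * exp \<bar>Y \<omega>\<bar>) * exp \<bar>Y \<omega>\<bar>"
      proof (rule mult_mono)
        show "cosh (t k * Y \<omega>) \<le> exp \<bar>Y \<omega>\<bar>"
          using cosh_mono_t[of "t k" "Y \<omega>"] t0[of k] t1[of k] cosh_le_exp_abs[of "Y \<omega>"] by linarith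
      qed (auto simp: sq_le_exp)
      then show ?thesis by simp
    qed
    also have "\<dots> = 4 * exp (2 * \<bar>Y \<omega>\<bar>)" by (simp add: exp_add[symmetric])
    also have "\<dots> \<le> 4 * W \<omega>" using Wge by simp
    finally show ?thesis by simp
  qed
  have sboundAE: "AE \<omega> in M. norm (s k \<omega>) \<le> W \<omega>" for k using sbound by simp
  have hboundAE: "AE \<omega> in M. norm (h k \<omega>) \<le> 4 * W \<omega>" for k using hbound by simp
  have slim: "(\<lambda>k. s k \<omega>) \<longlonglongrightarrow> Y \<omega>" for \<omega>
    unfolding s_def t_def by (rule lim_sinh_quot)
  have hlim: "(\<lambda>k. h k \<omega>) \<longlonglongrightarrow> (Y \<omega>)^2" for \<omega>
    unfolding h_def t_def by (rule lim_cosh_quot)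
  have sint: "(\<integral>\<omega>. s k \<omega> \<partial>M) = 0" for k
  proof -
    have "(\<integral>\<omega>. s k \<omega> \<partial>M) = ((\<integral>\<omega>. exp (t k * Y \<omega>) \<partial>M) - (\<integral>\<omega>. exp ((- t k) * Y \<omega>) \<partial>M)) / (2 * t k)"
      unfolding s_def using int[of "t k"] int[of "- t k"] by simp
    also have "\<dots> = 0" unfolding mgf by simp
    finally show ?thesis .
  qed
  have hint: "(\<integral>\<omega>. h k \<omega> \<partial>M) = (2 * exp ((t k)^2 * v / 2) - 2) / (t k)^2" for k
  proof -
    have "(\<integral>\<omega>. h k \<omega> \<partial>M) = ((\<integral>\<omega>. exp (t k * Y \<omega>) \<partial>M) + (\<integral>\<omega>. exp ((- t k) * Y \<omega>) \<partial>M) - 2) / (t k)^2"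
      unfolding h_def using int[of "t k"] int[of "- t k"] by (simp add: prob_space)
    also have "\<dots> = (2 * exp ((t k)^2 * v / 2) - 2) / (t k)^2" unfolding mgf by simp
    finally show ?thesis .
  qed
  have sm[measurable]: "s k \<in> borel_measurable M" for k unfolding s_def by measurable
  have hm[measurable]: "h k \<in> borel_measurable M" for k unfolding h_def by measurable
  have intY: "integrable M Y"
    by (rule integrable_dominated_convergence[where s = s and w = W, OF _ _ intW _ sboundAE]) (auto simp: slim)
  have EY: "(\<lambda>k. \<integral>\<omega>. s k \<omega> \<partial>M) \<longlonglongrightarrow> (\<integral>\<omega>. Y \<omega> \<partial>M)"
    by (rule integral_dominated_convergence[where s = s and w = W, OF _ _ intW _ sboundAE]) (auto simp: slim)
  then have EY0: "(\<integral>\<omega>. Y \<omega> \<partial>M) = 0" unfolding sint by (simp add: LIMSEQ_const_iff)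
  have intW4: "integrable M (\<lambda>\<omega>. 4 * W \<omega>)" using intW by simp
  have intY2: "integrable M (\<lambda>\<omega>. (Y \<omega>)^2)"
    by (rule integrable_dominated_convergence[where s = h and w = "\<lambda>\<omega>. 4 * W \<omega>", OF _ _ intW4 _ hboundAE]) (auto simp: hlim)
  have EY2: "(\<lambda>k. \<integral>\<omega>. h k \<omega> \<partial>M) \<longlonglongrightarrow> (\<integral>\<omega>. (Y \<omega>)^2 \<partial>M)"
    by (rule integral_dominated_convergence[where s = h and w = "\<lambda>\<omega>. 4 * W \<omega>", OF _ _ intW4 _ hboundAE]) (auto simp: hlim)
  moreover have "(\<lambda>k. \<integral>\<omega>. h k \<omega> \<partial>M) \<longlonglongrightarrow> v"
    unfolding hint t_def by (rule lim_mgf_quot)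
  ultimately have "(\<integral>\<omega>. (Y \<omega>)^2 \<partial>M) = v" by (rule LIMSEQ_unique)
  with intY EY0 intY2 show ?thesis by simp
qed

lemma posdef_inv:
  fixes S :: "real^'n^'n"
  assumes "sym_posdef S"
  shows "S ** matrix_inv S = mat 1" "matrix_inv S ** S = mat 1" "transpose (matrix_inv S) = matrix_inv S"
proof -
  have ST: "transpose S = S" and pd: "\<And>v. v \<noteq> 0 \<Longrightarrow> v \<bullet> (S *v v) > 0"
    using assms unfolding sym_posdef_def by auto
  have "\<forall>x. S *v x = 0 \<longrightarrow> x = 0"
  proof (intro allI impI)
    fix x assume "S *v x = 0"
    then have "x \<bullet> (S *v x) = 0" by simp
    then show "x = 0" using pd[of x] by (cases "x = 0") auto
  qed
  then obtain B where "B ** S = mat 1" using matrix_left_invertible_ker by blast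
  then have inv: "invertible S" using invertible_left_inverse by blast
  then have ex: "\<exists>A'. S ** A' = mat 1 \<and> A' ** S = mat 1" unfolding invertible_def by blast
  have G: "S ** matrix_inv S = mat 1 \<and> matrix_inv S ** S = mat 1"
    unfolding matrix_inv_def by (rule someI_ex[OF ex])
  then show SG: "S ** matrix_inv S = mat 1" and GS: "matrix_inv S ** S = mat 1" by auto
  have "transpose (matrix_inv S) ** S = mat 1"
  proof -
    have "transpose (matrix_inv S) ** S = transpose (transpose S ** matrix_inv S)"
      by (simp add: matrix_transpose_mul)
    also have "\<dots> = mat 1" using SG ST by (simp add: transpose_mat)
    finally show ?thesis .
  qed
  then have "transpose (matrix_inv S) = transpose (matrix_inv S) ** (S ** matrix_inv S)"
    using SG by simp
  also have "\<dots> = matrix_inv S" using \<open>transpose (matrix_inv S) ** S = mat 1\<close>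
    by (simp add: matrix_mul_assoc)
  finally show "transpose (matrix_inv S) = matrix_inv S" .
qed

lemma inner_sym_matrix:
  fixes G :: "real^'n^'n"
  assumes "transpose G = G"
  shows "u \<bullet> (G *v h) = h \<bullet> (G *v u)"
proof -
  have "u \<bullet> (G *v h) = (u v* G) \<bullet> h" by (simp add: dot_lmul_matrix)
  also have "u v* G = G *v u" using vector_transpose_matrix[of u G] assms by simp
  finally show ?thesis by (simp add: inner_commute)
qed

lemma gauss_pdf_shift:
  fixes S :: "real^'n^'n"
  assumes "sym_posdef S"
  shows "gauss_pdf S 0 (h + u) = gauss_pdf S 0 u * exp (- (h \<bullet> (matrix_inv S *v u)) - (h \<bullet> (matrix_inv S *v h)) / 2)"
proof -
  let ?G = "matrix_inv S"
  have sym: "u \<bullet> (?G *v h) = h \<bullet> (?G *v u)"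
    by (rule inner_sym_matrix) (rule posdef_inv(3)[OF assms])
  have "(h + u) \<bullet> (?G *v (h + u)) = u \<bullet> (?G *v u) + 2 * (h \<bullet> (?G *v u)) + h \<bullet> (?G *v h)"
    by (simp add: matrix_vector_right_distrib inner_add_left inner_add_right sym)
  then have "- (1/2) * ((h + u) \<bullet> (?G *v (h + u))) = - (1/2) * (u \<bullet> (?G *v u)) + (- (h \<bullet> (?G *v u)) - (h \<bullet> (?G *v h)) / 2)"
    by (simp add: field_simps)
  then have e: "exp (- (1/2) * ((h + u) \<bullet> (?G *v (h + u)))) = exp (- (1/2) * (u \<bullet> (?G *v u))) * exp (- (h \<bullet> (?G *v u)) - (h \<bullet> (?G *v h)) / 2)"
    by (simp only: exp_add[symmetric])
  show ?thesis unfolding gauss_pdf_def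
    by (simp only: e diff_zero) simp
qed

lemma gauss_mgf:
  fixes X :: "'a \<Rightarrow> real^'n" and S :: "real^'n^'n"
  assumes P: "prob_space M" and SP: "sym_posdef S"
    and D: "distributed M lborel X (\<lambda>u. ennreal (gauss_pdf S 0 u))"
  shows "(\<integral>\<^sup>+\<omega>. ennreal (exp (a \<bullet> X \<omega>)) \<partial>M) = ennreal (exp ((a \<bullet> (S *v a)) / 2))"
proof -
  interpret prob_space M by (rule P)
  let ?G = "matrix_inv S"
  let ?f = "\<lambda>u. ennreal (gauss_pdf S 0 u)"
  have ST: "transpose S = S" using SP unfolding sym_posdef_def by auto
  have fm[measurable]: "?f \<in> borel_measurable lborel" using D unfolding distributed_def by auto
  have Xm[measurable]: "X \<in> measurable M lborel" using D unfolding distributed_def by auto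
  have tot: "(\<integral>\<^sup>+u. ?f u \<partial>lborel) = 1"
  proof -
    have "(\<integral>\<^sup>+u. ?f u * 1 \<partial>lborel) = (\<integral>\<^sup>+\<omega>. 1 \<partial>M)"
      by (rule distributed_nn_integral[OF D]) simp
    then show ?thesis by (simp add: emeasure_space_1)
  qed
  have detpos: "det S > 0"
  proof (rule ccontr)
    assume "\<not> det S > 0"
    then have "(2 * pi) ^ CARD('n) * det S \<le> 0" by (simp add: mult_nonneg_nonpos)
    then have "sqrt ((2 * pi) ^ CARD('n) * det S) \<le> 0" by simp
    then have "gauss_pdf S 0 u \<le> 0" for u unfolding gauss_pdf_def by (simp add: divide_nonneg_nonpos)
    then have "?f u = 0" for u by (simp add: ennreal_eq_0_iff)
    then show False using tot by simp
  qed
  have fpos: "gauss_pdf S 0 u \<ge> 0" for u unfolding gauss_pdf_def using detpos by simp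
  define h where "h = - (S *v a)"
  have shm: "(\<lambda>u. ?f (h + u)) \<in> borel_measurable lborel"
    by (rule measurable_compose[OF _ fm]) simp
  have "(\<integral>\<^sup>+u. ?f (h + u) \<partial>lborel) = (\<integral>\<^sup>+u. ?f u \<partial>distr lborel borel ((+) h))"
    by (subst nn_integral_distr) (auto simp: fm)
  also have "\<dots> = 1" by (simp add: lborel_distr_plus tot)
  finally have tot2: "(\<integral>\<^sup>+u. ?f (h + u) \<partial>lborel) = 1" .
  have em: "(\<lambda>u. ennreal (exp (- (h \<bullet> (?G *v u))))) \<in> borel_measurable lborel"
  proof -
    have "(\<lambda>u. ennreal (exp (- ((h v* ?G) \<bullet> u)))) \<in> borel_measurable lborel" by measurable
    then show ?thesis by (simp add: dot_lmul_matrix)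
  qed
  have "(\<integral>\<^sup>+u. ?f (h + u) \<partial>lborel)
      = (\<integral>\<^sup>+u. ennreal (exp (- (h \<bullet> (?G *v h)) / 2)) * (?f u * ennreal (exp (- (h \<bullet> (?G *v u))))) \<partial>lborel)"
  proof (rule nn_integral_cong)
    fix u
    have "gauss_pdf S 0 u \<ge> 0" by (rule fpos)
    have ex: "exp (- (h \<bullet> (?G *v u)) - (h \<bullet> (?G *v h)) / 2) = exp (- (h \<bullet> (?G *v h)) / 2) * exp (- (h \<bullet> (?G *v u)))"
      by (simp add: exp_add[symmetric])
    have "gauss_pdf S 0 (h + u) = exp (- (h \<bullet> (?G *v h)) / 2) * (gauss_pdf S 0 u * exp (- (h \<bullet> (?G *v u))))"
      unfolding gauss_pdf_shift[OF SP] ex by simp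
    then show "?f (h + u) = ennreal (exp (- (h \<bullet> (?G *v h)) / 2)) * (?f u * ennreal (exp (- (h \<bullet> (?G *v u)))))"
      using fpos[of u] by (simp add: ennreal_mult'[symmetric] ennreal_mult[symmetric])
  qed
  also have "\<dots> = ennreal (exp (- (h \<bullet> (?G *v h)) / 2)) * (\<integral>\<^sup>+u. ?f u * ennreal (exp (- (h \<bullet> (?G *v u)))) \<partial>lborel)"
    by (rule nn_integral_cmult) (use em in measurable)
  also have "(\<integral>\<^sup>+u. ?f u * ennreal (exp (- (h \<bullet> (?G *v u)))) \<partial>lborel)
       = (\<integral>\<^sup>+\<omega>. ennreal (exp (- (h \<bullet> (?G *v X \<omega>)))) \<partial>M)"
    by (rule distributed_nn_integral[OF D em])
  finally have "ennreal (exp (- (h \<bullet> (?G *v h)) / 2)) * (\<integral>\<^sup>+\<omega>. ennreal (exp (- (h \<bullet> (?G *v X \<omega>)))) \<partial>M) = 1"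
    using tot2 by simp
  then have "(\<integral>\<^sup>+\<omega>. ennreal (exp (- (h \<bullet> (?G *v X \<omega>)))) \<partial>M) = ennreal (exp ((h \<bullet> (?G *v h)) / 2))"
  proof -
    assume A: "ennreal (exp (- (h \<bullet> (?G *v h)) / 2)) * (\<integral>\<^sup>+\<omega>. ennreal (exp (- (h \<bullet> (?G *v X \<omega>)))) \<partial>M) = 1"
    have c1: "ennreal (exp ((h \<bullet> (?G *v h)) / 2)) * ennreal (exp (- (h \<bullet> (?G *v h)) / 2)) = 1"
      by (simp add: ennreal_mult'[symmetric] exp_add[symmetric])
    have "(\<integral>\<^sup>+\<omega>. ennreal (exp (- (h \<bullet> (?G *v X \<omega>)))) \<partial>M)
        = (ennreal (exp ((h \<bullet> (?G *v h)) / 2)) * ennreal (exp (- (h \<bullet> (?G *v h)) / 2))) * (\<integral>\<^sup>+\<omega>. ennreal (exp (- (h \<bullet> (?G *v X \<omega>)))) \<partial>M)"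
      unfolding c1 by simp
    also have "\<dots> = ennreal (exp ((h \<bullet> (?G *v h)) / 2))"
      unfolding mult.assoc A by simp
    finally show ?thesis .
  qed
  moreover have "- (h \<bullet> (?G *v x)) = a \<bullet> x" for x
  proof -
    have "- (h \<bullet> (?G *v x)) = (S *v a) \<bullet> (?G *v x)" unfolding h_def by simp
    also have "\<dots> = a \<bullet> (S *v (?G *v x))" using inner_sym_matrix[OF ST, of "?G *v x" a]
      by (simp add: inner_commute)
    also have "\<dots> = a \<bullet> x" by (simp add: matrix_vector_mul_assoc posdef_inv(1)[OF SP])
    finally show ?thesis .
  qed
  moreover have "h \<bullet> (?G *v h) = a \<bullet> (S *v a)"
  proof -
    have "?G *v h = - a" unfolding h_def
      using matrix_vector_mul_assoc[of ?G S a] posdef_inv(2)[OF SP]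
      by (simp add: vec.neg)
    then show ?thesis unfolding h_def by (simp add: inner_commute)
  qed
  moreover have True by (simp add: matrix_vector_mul_assoc posdef_inv(2)[OF SP] inner_commute)
  ultimately show ?thesis by simp
qed

lemma gauss_det_pos:
  fixes X :: "'a \<Rightarrow> real^'n" and S :: "real^'n^'n"
  assumes P: "prob_space M"
    and D: "distributed M lborel X (\<lambda>u. ennreal (gauss_pdf S 0 u))"
  shows "det S > 0"
proof -
  interpret prob_space M by (rule P)
  let ?f = "\<lambda>u. ennreal (gauss_pdf S 0 u)"
  have tot: "(\<integral>\<^sup>+u. ?f u \<partial>lborel) = 1"
  proof -
    have "(\<integral>\<^sup>+u. ?f u * 1 \<partial>lborel) = (\<integral>\<^sup>+\<omega>. 1 \<partial>M)"
      by (rule distributed_nn_integral[OF D]) simp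
    then show ?thesis by (simp add: emeasure_space_1)
  qed
  show "det S > 0"
  proof (rule ccontr)
    assume "\<not> det S > 0"
    then have "(2 * pi) ^ CARD('n) * det S \<le> 0" by (simp add: mult_nonneg_nonpos)
    then have "sqrt ((2 * pi) ^ CARD('n) * det S) \<le> 0" by simp
    then have "gauss_pdf S 0 u \<le> 0" for u unfolding gauss_pdf_def by (simp add: divide_nonneg_nonpos)
    then have "?f u = 0" for u by (simp add: ennreal_eq_0_iff)
    then show False using tot by simp
  qed
qed

lemma gauss_dir:
  fixes X :: "'a \<Rightarrow> real^'n" and S :: "real^'n^'n"
  assumes P: "prob_space M" and SP: "sym_posdef S"
    and D: "distributed M lborel X (\<lambda>u. ennreal (gauss_pdf S 0 u))"
  shows "integrable M (\<lambda>\<omega>. a \<bullet> X \<omega>) \<and> (\<integral>\<omega>. a \<bullet> X \<omega> \<partial>M) = 0 \<and>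
         integrable M (\<lambda>\<omega>. (a \<bullet> X \<omega>)^2) \<and> (\<integral>\<omega>. (a \<bullet> X \<omega>)^2 \<partial>M) = a \<bullet> (S *v a)"
proof -
  interpret prob_space M by (rule P)
  have Xm[measurable]: "X \<in> borel_measurable M" using D unfolding distributed_def by auto
  have Ym[measurable]: "(\<lambda>\<omega>. a \<bullet> X \<omega>) \<in> borel_measurable M" by measurable
  have nn: "(\<integral>\<^sup>+\<omega>. ennreal (exp (c * (a \<bullet> X \<omega>))) \<partial>M) = ennreal (exp (c^2 * (a \<bullet> (S *v a)) / 2))" for c
  proof -
    have "(\<integral>\<^sup>+\<omega>. ennreal (exp (c * (a \<bullet> X \<omega>))) \<partial>M) = (\<integral>\<^sup>+\<omega>. ennreal (exp ((c *\<^sub>R a) \<bullet> X \<omega>)) \<partial>M)"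
      by simp
    also have "\<dots> = ennreal (exp (((c *\<^sub>R a) \<bullet> (S *v (c *\<^sub>R a))) / 2))"
      by (rule gauss_mgf[OF P SP D])
    also have "((c *\<^sub>R a) \<bullet> (S *v (c *\<^sub>R a))) = c^2 * (a \<bullet> (S *v a))"
      by (simp add: matrix_vector_mult_scaleR power2_eq_square)
    finally show ?thesis by simp
  qed
  have int: "integrable M (\<lambda>\<omega>. exp (c * (a \<bullet> X \<omega>)))" for c
    by (rule integrableI_bounded) (auto simp: nn)
  have mgf: "(\<integral>\<omega>. exp (c * (a \<bullet> X \<omega>)) \<partial>M) = exp (c^2 * (a \<bullet> (S *v a)) / 2)" for c
  proof -
    have "ennreal (\<integral>\<omega>. exp (c * (a \<bullet> X \<omega>)) \<partial>M) = ennreal (exp (c^2 * (a \<bullet> (S *v a)) / 2))"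
      by (subst nn_integral_eq_integral[symmetric]) (auto simp: int nn)
    then show ?thesis by (subst (asm) ennreal_inj) auto
  qed
  show ?thesis by (rule mgf_moments[OF P Ym int mgf])
qed

lemma gauss_moments:
  fixes X :: "'a \<Rightarrow> real^'n" and S :: "real^'n^'n"
  assumes P: "prob_space M" and SP: "sym_posdef S"
    and D: "distributed M lborel X (\<lambda>u. ennreal (gauss_pdf S 0 u))"
  shows "integrable M (\<lambda>\<omega>. X \<omega> $ i)" "(\<integral>\<omega>. X \<omega> $ i \<partial>M) = 0"
    "integrable M (\<lambda>\<omega>. X \<omega> $ i * X \<omega> $ j)" "(\<integral>\<omega>. X \<omega> $ i * X \<omega> $ j \<partial>M) = S $ i $ j"
proof -
  interpret prob_space M by (rule P)
  have ST: "transpose S = S" using SP unfolding sym_posdef_def by auto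
  then have Ssym: "S $ j $ i = S $ i $ j" for i j
    by (metis transpose_def vec_lambda_beta)
  have comp: "X \<omega> $ k = axis k 1 \<bullet> X \<omega>" for \<omega> k by (simp add: inner_axis')
  have Sij: "axis i 1 \<bullet> (S *v axis j 1) = S $ i $ j" for i j
    by (simp add: inner_axis' matrix_vector_mult_basis column_def)
  note Di = gauss_dir[OF P SP D, of "axis i 1"]
  note Dj = gauss_dir[OF P SP D, of "axis j 1"]
  note Dij = gauss_dir[OF P SP D, of "axis i 1 + axis j 1"]
  show "integrable M (\<lambda>\<omega>. X \<omega> $ i)" "(\<integral>\<omega>. X \<omega> $ i \<partial>M) = 0"
    using Di unfolding comp by auto
  have eq: "X \<omega> $ i * X \<omega> $ j = ((axis i 1 + axis j 1) \<bullet> X \<omega>)^2 / 2 - (axis i 1 \<bullet> X \<omega>)^2 / 2 - (axis j 1 \<bullet> X \<omega>)^2 / 2" for \<omega>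
    unfolding comp by (simp add: inner_add_left power2_eq_square field_simps)
  show "integrable M (\<lambda>\<omega>. X \<omega> $ i * X \<omega> $ j)"
    unfolding eq using Di Dj Dij by auto
  have "(\<integral>\<omega>. X \<omega> $ i * X \<omega> $ j \<partial>M)
      = (\<integral>\<omega>. ((axis i 1 + axis j 1) \<bullet> X \<omega>)^2 \<partial>M) / 2 - (\<integral>\<omega>. (axis i 1 \<bullet> X \<omega>)^2 \<partial>M) / 2 - (\<integral>\<omega>. (axis j 1 \<bullet> X \<omega>)^2 \<partial>M) / 2"
    unfolding eq using Di Dj Dij by simp
  also have "\<dots> = ((axis i 1 + axis j 1) \<bullet> (S *v (axis i 1 + axis j 1))) / 2 - (axis i 1 \<bullet> (S *v axis i 1)) / 2 - (axis j 1 \<bullet> (S *v axis j 1)) / 2"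
    using Di Dj Dij by simp
  also have "\<dots> = S $ i $ j"
    by (simp add: matrix_vector_right_distrib inner_add_left inner_add_right Sij Ssym field_simps)
  finally show "(\<integral>\<omega>. X \<omega> $ i * X \<omega> $ j \<partial>M) = S $ i $ j" .
qed

lemma Int_stable_pre:
  fixes f :: "'a \<Rightarrow> 'b::topological_space"
  shows "Int_stable {f -` A \<inter> \<Omega> | A. A \<in> sets (borel :: 'b measure)}"
  unfolding Int_stable_def
proof (safe)
  fix A B :: "'b set" assume "A \<in> sets borel" "B \<in> sets borel"
  then show "\<exists>C. (f -` A \<inter> \<Omega>) \<inter> (f -` B \<inter> \<Omega>) = f -` C \<inter> \<Omega> \<and> C \<in> sets borel"
    by (intro exI[of _ "A \<inter> B"]) auto
qed

locale noisy = prob_space M for M :: "'a measure" +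
  fixes wx :: "nat \<Rightarrow> 'a \<Rightarrow> real" and wu xi :: "nat \<Rightarrow> 'a \<Rightarrow> real^'n"
  assumes mx[measurable]: "\<And>t. wx t \<in> borel_measurable M"
    and mu[measurable]: "\<And>t. wu t \<in> borel_measurable M"
    and mxi[measurable]: "\<And>t. xi t \<in> borel_measurable M"
    and ind: "indep_sets (noise_events M wx wu xi) (UNIV \<times> {0, 1, 2})"
begin

abbreviation "NE \<equiv> noise_events M wx wu xi"

definition sig :: "(nat \<times> nat) set \<Rightarrow> 'a measure" where
  "sig J = sigma (space M) (\<Union>j\<in>J. NE j)"

lemma NE_sub: "NE j \<subseteq> sets M"
proof -
  obtain t k where j: "j = (t, k)" by (cases j)
  show ?thesis unfolding j noise_events_def
    by (auto intro!: measurable_sets)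
qed

lemma NE_pow: "(\<Union>j\<in>J. NE j) \<subseteq> Pow (space M)"
  using NE_sub sets.sets_into_space by blast

lemma space_sig[simp]: "space (sig J) = space M"
  unfolding sig_def using NE_pow by (simp add: space_measure_of_conv)

lemma sets_sig: "sets (sig J) = sigma_sets (space M) (\<Union>j\<in>J. NE j)"
  unfolding sig_def using NE_pow by (simp add: sets_measure_of)

lemma sets_sig_sub: "sets (sig J) \<subseteq> sets M"
  unfolding sets_sig using NE_sub by (intro sets.sigma_sets_subset) auto

lemma subalg_sig: "subalgebra M (sig J)"
  unfolding subalgebra_def using sets_sig_sub by simp

lemma meas_sig_M: "X \<in> borel_measurable (sig J) \<Longrightarrow> X \<in> borel_measurable M"
  by (rule measurable_from_subalg[OF subalg_sig])

lemma meas_sig_mono: "J \<subseteq> J' \<Longrightarrow> X \<in> borel_measurable (sig J) \<Longrightarrow> X \<in> borel_measurable (sig J')"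
proof (rule measurable_from_subalg)
  assume "J \<subseteq> J'"
  then have "sets (sig J) \<subseteq> sets (sig J')"
    unfolding sets_sig by (rule sigma_sets_subseteq[OF UN_mono]) auto
  then show "subalgebra (sig J') (sig J)" unfolding subalgebra_def by simp
qed

lemma meas_sig_gen:
  assumes "j \<in> J" "\<And>A. A \<in> sets borel \<Longrightarrow> f -` A \<inter> space M \<in> NE j"
  shows "f \<in> borel_measurable (sig J)"
proof (rule measurableI)
  fix A :: "'b set" assume "A \<in> sets borel"
  then have "f -` A \<inter> space M \<in> (\<Union>j\<in>J. NE j)" using assms by blast
  then show "f -` A \<inter> space (sig J) \<in> sets (sig J)" unfolding sets_sig by auto
qed simp

lemma wx_sig: "(t, 0) \<in> J \<Longrightarrow> wx t \<in> borel_measurable (sig J)"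
  by (rule meas_sig_gen, assumption) (unfold noise_events_def, auto)

lemma wu_sig: "(t, 1) \<in> J \<Longrightarrow> wu t \<in> borel_measurable (sig J)"
  by (rule meas_sig_gen, assumption) (unfold noise_events_def, auto)

lemma xi_sig: "(t, 2) \<in> J \<Longrightarrow> xi t \<in> borel_measurable (sig J)"
  by (rule meas_sig_gen, assumption) (unfold noise_events_def, auto)

lemma NE_Int_stable: "Int_stable (NE j)"
proof -
  obtain t k where j: "j = (t, k)" by (cases j)
  show ?thesis unfolding j noise_events_def by (auto intro: Int_stable_pre)
qed

lemma indep2:
  fixes X Y :: "'a \<Rightarrow> real"
  assumes J: "J1 \<subseteq> UNIV \<times> {0,1,2}" "J2 \<subseteq> UNIV \<times> {0,1,2}" "J1 \<inter> J2 = {}"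
    and X: "X \<in> borel_measurable (sig J1)" and Y: "Y \<in> borel_measurable (sig J2)"
    and iX: "integrable M X" and iY: "integrable M Y"
  shows "integrable M (\<lambda>\<omega>. X \<omega> * Y \<omega>) \<and> (\<integral>\<omega>. X \<omega> * Y \<omega> \<partial>M) = (\<integral>\<omega>. X \<omega> \<partial>M) * (\<integral>\<omega>. Y \<omega> \<partial>M)"
proof -
  define I where "I b = (if b then J1 else J2)" for b
  have "indep_sets (\<lambda>b. sigma_sets (space M) (\<Union>i\<in>I b. NE i)) UNIV"
  proof (rule indep_sets_collect_sigma)
    show "indep_sets NE (\<Union>j\<in>UNIV. I j)"
      by (rule indep_sets_mono_index[OF _ ind]) (use J in \<open>auto simp: I_def\<close>)
    show "Int_stable (NE i)" for i by (rule NE_Int_stable)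
    show "disjoint_family_on I UNIV"
      using J unfolding disjoint_family_on_def I_def by auto
  qed
  then have ii: "indep_sets (\<lambda>b. sets (sig (I b))) UNIV" by (simp add: sets_sig)
  have rv: "random_variable (case_bool borel borel b) (case_bool X Y b)" for b :: bool
    using meas_sig_M[OF X] meas_sig_M[OF Y] by (cases b) auto
  have iss: "indep_sets (\<lambda>i. sigma_sets (space M) {case_bool X Y i -` A \<inter> space M |A. A \<in> sets (case_bool borel borel i)}) UNIV"
  proof (rule indep_sets_mono_sets[OF ii])
    fix b :: bool
    have "{case_bool X Y b -` A \<inter> space M |A. A \<in> sets (case_bool borel borel b)} \<subseteq> sets (sig (I b))"
    proof (cases b)
      case True
      then show ?thesis using measurable_sets[OF X] by (auto simp: I_def)
    next
      case False
      then show ?thesis using measurable_sets[OF Y] by (auto simp: I_def)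
    qed
    from sets.sigma_sets_subset[OF this]
    show "sigma_sets (space M) {case_bool X Y b -` A \<inter> space M |A. A \<in> sets (case_bool borel borel b)} \<subseteq> sets (sig (I b))"
      by simp
  qed
  have "indep_var borel X borel Y"
    unfolding indep_var_def indep_vars_def using rv iss by blast
  then show ?thesis using indep_var_lebesgue_integral indep_var_integrable iX iY by auto
qed

end

lemma borel_measurable_mv[measurable (raw)]:
  fixes D :: "real^'n^'m"
  assumes f: "f \<in> borel_measurable N"
  shows "(\<lambda>\<omega>. D *v f \<omega>) \<in> borel_measurable N"
  by (rule borel_measurable_continuous_on[OF _ f]) (intro continuous_intros)

lemma borel_measurable_vm[measurable (raw)]:
  fixes D :: "real^'m^'n"
  assumes f: "f \<in> borel_measurable N"
  shows "(\<lambda>\<omega>. f \<omega> v* D) \<in> borel_measurable N"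
proof -
  have "(\<lambda>\<omega>. transpose D *v f \<omega>) \<in> borel_measurable N" using f by measurable
  then show ?thesis by simp
qed

lemma vec_moments:
  fixes V :: "'a \<Rightarrow> real^'n" and Cm :: "real^'n^'n"
  assumes i1: "\<And>i. integrable M (\<lambda>\<omega>. V \<omega> $ i)" and e1: "\<And>i. (\<integral>\<omega>. V \<omega> $ i \<partial>M) = 0"
    and i2: "\<And>i j. integrable M (\<lambda>\<omega>. V \<omega> $ i * V \<omega> $ j)"
    and e2: "\<And>i j. (\<integral>\<omega>. V \<omega> $ i * V \<omega> $ j \<partial>M) = Cm $ i $ j"
  shows "integrable M (\<lambda>\<omega>. V \<omega> \<bullet> c)" "(\<integral>\<omega>. V \<omega> \<bullet> c \<partial>M) = 0"
    "integrable M (\<lambda>\<omega>. (V \<omega> \<bullet> c) * (V \<omega> \<bullet> d))" "(\<integral>\<omega>. (V \<omega> \<bullet> c) * (V \<omega> \<bullet> d) \<partial>M) = c \<bullet> (Cm *v d)"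
proof -
  have lin: "V \<omega> \<bullet> e = (\<Sum>i\<in>UNIV. e $ i * V \<omega> $ i)" for \<omega> e
    by (simp add: inner_vec_def mult.commute)
  show "integrable M (\<lambda>\<omega>. V \<omega> \<bullet> c)" unfolding lin using i1 by auto
  show "(\<integral>\<omega>. V \<omega> \<bullet> c \<partial>M) = 0" unfolding lin using i1 e1 by (simp add: integral_sum)
  have quad: "(V \<omega> \<bullet> c) * (V \<omega> \<bullet> d) = (\<Sum>i\<in>UNIV. \<Sum>j\<in>UNIV. (c $ i * d $ j) * (V \<omega> $ i * V \<omega> $ j))" for \<omega>
    unfolding lin[of \<omega> c] lin[of \<omega> d] sum_product by (simp add: algebra_simps)
  show "integrable M (\<lambda>\<omega>. (V \<omega> \<bullet> c) * (V \<omega> \<bullet> d))" unfolding quad using i2 by auto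
  have "(\<integral>\<omega>. (V \<omega> \<bullet> c) * (V \<omega> \<bullet> d) \<partial>M) = (\<Sum>i\<in>UNIV. \<Sum>j\<in>UNIV. (c $ i * d $ j) * Cm $ i $ j)"
    unfolding quad using i2 e2 by (simp add: integral_sum)
  also have "\<dots> = c \<bullet> (Cm *v d)"
    by (simp add: inner_vec_def matrix_vector_mult_def sum_distrib_left algebra_simps)
  finally show "(\<integral>\<omega>. (V \<omega> \<bullet> c) * (V \<omega> \<bullet> d) \<partial>M) = c \<bullet> (Cm *v d)" .
qed

locale lqr = noisy M wx wu xi
  for M :: "'a measure" and wx :: "nat \<Rightarrow> 'a \<Rightarrow> real" and wu xi :: "nat \<Rightarrow> 'a \<Rightarrow> real^'n" +
  fixes A C :: real and B :: "real^'n" and D :: "real^'n^'n" and K :: "real^'n" and S :: "real^'n^'n"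
    and x0 :: real
  assumes SP: "sym_posdef S"
    and wx_int: "\<And>t. integrable M (wx t)" "\<And>t. integrable M (\<lambda>\<omega>. (wx t \<omega>)^2)"
    and wx_mom: "\<And>t. integral\<^sup>L M (wx t) = 0" "\<And>t. integral\<^sup>L M (\<lambda>\<omega>. (wx t \<omega>)^2) = 1"
    and wu_int: "\<And>t i. integrable M (\<lambda>\<omega>. wu t \<omega> $ i)"
                "\<And>t i j. integrable M (\<lambda>\<omega>. wu t \<omega> $ i * wu t \<omega> $ j)"
    and wu_mom: "\<And>t i. integral\<^sup>L M (\<lambda>\<omega>. wu t \<omega> $ i) = 0"
                "\<And>t i j. integral\<^sup>L M (\<lambda>\<omega>. wu t \<omega> $ i * wu t \<omega> $ j) = (if i = j then 1 else 0)"
    and xi_gauss: "\<And>t. distributed M lborel (xi t) (\<lambda>u. ennreal (gauss_pdf S 0 u))"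
begin

abbreviation "X \<equiv> ctrl_state A C B D K wx wu xi x0"

definition PJ :: "nat \<Rightarrow> (nat \<times> nat) set" where "PJ t = {..<t} \<times> {0,1,2}"

lemma X_meas: "X t \<in> borel_measurable (sig (PJ t))"
proof (induction t)
  case 0
  then show ?case by simp
next
  case (Suc t)
  have [measurable]: "X t \<in> borel_measurable (sig (PJ (Suc t)))"
    by (rule meas_sig_mono[OF _ Suc]) (auto simp: PJ_def)
  have [measurable]: "wx t \<in> borel_measurable (sig (PJ (Suc t)))"
    "wu t \<in> borel_measurable (sig (PJ (Suc t)))" "xi t \<in> borel_measurable (sig (PJ (Suc t)))"
    by (auto intro!: wx_sig wu_sig xi_sig simp: PJ_def)
  show ?case by (simp add: Let_def) measurable
qed

lemma X_measM[measurable]: "X t \<in> borel_measurable M"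
  by (rule meas_sig_M[OF X_meas])

lemma w_mom: "integrable M (\<lambda>\<omega>. wu t \<omega> \<bullet> c)" "(\<integral>\<omega>. wu t \<omega> \<bullet> c \<partial>M) = 0"
    "integrable M (\<lambda>\<omega>. (wu t \<omega> \<bullet> c) * (wu t \<omega> \<bullet> d))" "(\<integral>\<omega>. (wu t \<omega> \<bullet> c) * (wu t \<omega> \<bullet> d) \<partial>M) = c \<bullet> d"
proof -
  have e2: "(\<integral>\<omega>. wu t \<omega> $ i * wu t \<omega> $ j \<partial>M) = (mat 1 :: real^'n^'n) $ i $ j" for i j
    by (simp add: wu_mom mat_def)
  note vm = vec_moments[where V="wu t", OF wu_int(1) wu_mom(1) wu_int(2) e2]
  show "integrable M (\<lambda>\<omega>. wu t \<omega> \<bullet> c)" "(\<integral>\<omega>. wu t \<omega> \<bullet> c \<partial>M) = 0"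
    "integrable M (\<lambda>\<omega>. (wu t \<omega> \<bullet> c) * (wu t \<omega> \<bullet> d))" using vm by auto
  show "(\<integral>\<omega>. (wu t \<omega> \<bullet> c) * (wu t \<omega> \<bullet> d) \<partial>M) = c \<bullet> d" using vm by simp
qed

lemma xi_mom: "integrable M (\<lambda>\<omega>. xi t \<omega> \<bullet> c)" "(\<integral>\<omega>. xi t \<omega> \<bullet> c \<partial>M) = 0"
    "integrable M (\<lambda>\<omega>. (xi t \<omega> \<bullet> c) * (xi t \<omega> \<bullet> d))" "(\<integral>\<omega>. (xi t \<omega> \<bullet> c) * (xi t \<omega> \<bullet> d) \<partial>M) = c \<bullet> (S *v d)"
  using vec_moments[where V="xi t", OF gauss_moments(1,2,3,4)[OF prob_space_axioms SP xi_gauss]] by auto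

end

context lqr
begin

definition "kv = D *v K"
definition "al = A - B \<bullet> K"
definition sqv :: real where "sqv = B \<bullet> (S *v B) + (\<Sum>i\<in>UNIV. D $ i \<bullet> (S *v D $ i))"

lemma Vk_eq: "V_K A C B D K = al^2 + C^2 + kv \<bullet> kv"
proof -
  have obi: "(outer B B *v K) $ i = B $ i * (B \<bullet> K)" for i
    by (simp add: outer_def matrix_vector_mult_def inner_vec_def mult.assoc sum_distrib_left)
  have ob: "outer B B *v K = (B \<bullet> K) *\<^sub>R B"
    by (simp add: vec_eq_iff obi mult.commute)
  have o: "K \<bullet> (outer B B *v K) = (B \<bullet> K)^2"
    unfolding ob by (simp add: power2_eq_square inner_commute)
  have d: "K \<bullet> ((transpose D ** D) *v K) = kv \<bullet> kv"
  proof -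
    have "K \<bullet> ((transpose D ** D) *v K) = K \<bullet> ((D *v K) v* D)"
      by (simp flip: matrix_vector_mul_assoc)
    also have "\<dots> = (D *v K) \<bullet> (D *v K)" by (subst inner_commute) (simp add: dot_lmul_matrix)
    finally show ?thesis by (simp add: kv_def)
  qed
  show ?thesis unfolding V_K_def al_def
    by (simp add: matrix_vector_mult_add_rdistrib inner_add_right o d power2_eq_square algebra_simps)
qed

lemma X_Suc: "X (Suc t) \<omega> = X t \<omega> * (al + wx t \<omega> * C - wu t \<omega> \<bullet> kv) + (B + wu t \<omega> v* D) \<bullet> xi t \<omega>"
proof -
  have "(wu t \<omega> v* D) \<bullet> K = wu t \<omega> \<bullet> kv" by (simp add: dot_lmul_matrix kv_def)
  then show ?thesis
    by (simp add: Let_def al_def inner_diff_right inner_add_left algebra_simps)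
qed

lemma sq_integrable_imp: "integrable M (\<lambda>\<omega>. (f \<omega>)^2) \<Longrightarrow> f \<in> borel_measurable M \<Longrightarrow> integrable M (f::'a \<Rightarrow> real)"
proof -
  assume i: "integrable M (\<lambda>\<omega>. (f \<omega>)^2)" and m: "f \<in> borel_measurable M"
  have "integrable M (\<lambda>\<omega>. 1 + (f \<omega>)^2)" using i by simp
  then show ?thesis
  proof (rule Bochner_Integration.integrable_bound)
    show "AE x in M. norm (f x) \<le> norm (1 + (f x)^2)"
    proof (rule AE_I2)
      fix x
      have "\<bar>f x\<bar> \<le> 1 + (f x)^2"
      proof (cases "\<bar>f x\<bar> \<le> 1")
        case True then show ?thesis by (simp add: add_increasing2)
      next
        case False
        then have "\<bar>f x\<bar> * 1 \<le> \<bar>f x\<bar> * \<bar>f x\<bar>" by (intro mult_left_mono) auto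
        also have "\<dots> = (f x)^2" by (simp add: power2_eq_square abs_mult_self_eq)
        finally show ?thesis by simp
      qed
      then show "norm (f x) \<le> norm (1 + (f x)^2)" by simp
    qed
  qed (rule m)
qed

end

lemma borel_measurable_vec_nth'[measurable (raw)]:
  fixes f :: "'a \<Rightarrow> real^'n"
  assumes f: "f \<in> borel_measurable N"
  shows "(\<lambda>\<omega>. f \<omega> $ j) \<in> borel_measurable N"
proof -
  have "(\<lambda>\<omega>. f \<omega> \<bullet> axis j 1) \<in> borel_measurable N" using f by measurable
  then show ?thesis by (simp add: cart_eq_inner_axis)
qed

context lqr
begin

lemma PJ_sub: "PJ t \<subseteq> UNIV \<times> {0,1,2}" by (auto simp: PJ_def)

lemma xi_comp: "integrable M (\<lambda>\<omega>. xi t \<omega> $ i)" "(\<integral>\<omega>. xi t \<omega> $ i \<partial>M) = 0"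
  using gauss_moments(1,2)[OF prob_space_axioms SP xi_gauss] by auto

lemma step:
  assumes ix2: "integrable M (\<lambda>\<omega>. (X t \<omega>)^2)"
  shows "integrable M (\<lambda>\<omega>. (X (Suc t) \<omega>)^2) \<and>
         (\<integral>\<omega>. (X (Suc t) \<omega>)^2 \<partial>M) = V_K A C B D K * (\<integral>\<omega>. (X t \<omega>)^2 \<partial>M) + sqv"
proof -
  define J01 where "J01 = {(t, 0::nat), (t, 1)}"
  define J0 where "J0 = {(t, 0::nat)}"
  define J1 where "J1 = {(t, 1::nat)}"
  define J2 where "J2 = {(t, 2::nat)}"
  define JP where "JP = PJ t \<union> J01"
  have subs: "J01 \<subseteq> UNIV \<times> {0,1,2}" "J0 \<subseteq> UNIV \<times> {0,1,2}" "J1 \<subseteq> UNIV \<times> {0,1,2}"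
    "J2 \<subseteq> UNIV \<times> {0,1,2}" "JP \<subseteq> UNIV \<times> {0,1,2}" "PJ t \<subseteq> UNIV \<times> {0,1,2}"
    by (auto simp: J01_def J0_def J1_def J2_def JP_def PJ_def)
  have disj: "PJ t \<inter> J01 = {}" "JP \<inter> J2 = {}" "J0 \<inter> J1 = {}" "J1 \<inter> J2 = {}"
    by (auto simp: J01_def J0_def J1_def J2_def JP_def PJ_def)
  have mx_P[measurable]: "X t \<in> borel_measurable (sig (PJ t))" by (rule X_meas)
  have mx_JP[measurable]: "X t \<in> borel_measurable (sig JP)"
    by (rule meas_sig_mono[OF _ X_meas]) (auto simp: JP_def)
  have m01[measurable]: "wx t \<in> borel_measurable (sig J01)" "wu t \<in> borel_measurable (sig J01)"
    by (auto intro!: wx_sig wu_sig simp: J01_def)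
  have mJP[measurable]: "wx t \<in> borel_measurable (sig JP)" "wu t \<in> borel_measurable (sig JP)"
    by (auto intro!: wx_sig wu_sig simp: JP_def J01_def)
  have m0[measurable]: "wx t \<in> borel_measurable (sig J0)" by (auto intro!: wx_sig simp: J0_def)
  have m1[measurable]: "wu t \<in> borel_measurable (sig J1)" by (auto intro!: wu_sig simp: J1_def)
  have m2[measurable]: "xi t \<in> borel_measurable (sig J2)" by (auto intro!: xi_sig simp: J2_def)
  have m2j[measurable]: "(\<lambda>\<omega>. xi t \<omega> $ j) \<in> borel_measurable (sig J2)" for j by measurable
  have m1j[measurable]: "(\<lambda>\<omega>. wu t \<omega> $ j) \<in> borel_measurable (sig J1)" for j by measurable
  have ix: "integrable M (X t)" by (rule sq_integrable_imp[OF ix2]) measurable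
  \<comment> \<open>product of a and w.c\<close>
  have aw: "integrable M (\<lambda>\<omega>. wx t \<omega> * (wu t \<omega> \<bullet> c)) \<and> (\<integral>\<omega>. wx t \<omega> * (wu t \<omega> \<bullet> c) \<partial>M) = 0" for c
    using indep2[OF subs(2) subs(3) disj(3), where X = "wx t" and Y = "\<lambda>\<omega>. wu t \<omega> \<bullet> c"]
    by (simp add: wx_int wx_mom w_mom)
  define \<beta> where "\<beta> \<omega> = al + wx t \<omega> * C - wu t \<omega> \<bullet> kv" for \<omega>
  have mb[measurable]: "\<beta> \<in> borel_measurable (sig J01)" unfolding \<beta>_def by measurable
  have b2eq: "(\<beta> \<omega>)^2 = al^2 + C^2 * (wx t \<omega>)^2 + (wu t \<omega> \<bullet> kv) * (wu t \<omega> \<bullet> kv)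
      + (2 * al * C) * wx t \<omega> - (2 * al) * (wu t \<omega> \<bullet> kv) - (2 * C) * (wx t \<omega> * (wu t \<omega> \<bullet> kv))" for \<omega>
    unfolding \<beta>_def by (simp add: power2_eq_square algebra_simps)
  have ib2: "integrable M (\<lambda>\<omega>. (\<beta> \<omega>)^2)"
    unfolding b2eq using aw[of kv] by (simp add: wx_int w_mom)
  have eb2: "(\<integral>\<omega>. (\<beta> \<omega>)^2 \<partial>M) = V_K A C B D K"
    unfolding b2eq Vk_eq using aw[of kv] wx_int w_mom wx_mom
    by (simp add: prob_space)
  have xb: "integrable M (\<lambda>\<omega>. (X t \<omega>)^2 * (\<beta> \<omega>)^2) \<and>
      (\<integral>\<omega>. (X t \<omega>)^2 * (\<beta> \<omega>)^2 \<partial>M) = (\<integral>\<omega>. (X t \<omega>)^2 \<partial>M) * V_K A C B D K"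
    using indep2[OF subs(6) subs(1) disj(1), where X = "\<lambda>\<omega>. (X t \<omega>)^2" and Y = "\<lambda>\<omega>. (\<beta> \<omega>)^2"]
      ix2 ib2 eb2 by simp
  \<comment> \<open>cross term\<close>
  define cc where "cc j \<omega> = B $ j + wu t \<omega> \<bullet> column j D" for j \<omega>
  define \<eta> where "\<eta> \<omega> = (B + wu t \<omega> v* D) \<bullet> xi t \<omega>" for \<omega>
  have vm: "(w v* D) $ j = w \<bullet> column j D" for w :: "real^'n" and j
    by (simp add: vector_matrix_mult_def column_def inner_vec_def mult.commute)
  have eta_sum: "\<eta> \<omega> = (\<Sum>j\<in>UNIV. cc j \<omega> * xi t \<omega> $ j)" for \<omega>
    unfolding \<eta>_def cc_def inner_vec_def[of "B + wu t \<omega> v* D"] by (simp add: vm)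
  have bceq: "\<beta> \<omega> * cc j \<omega> = al * B $ j + al * (wu t \<omega> \<bullet> column j D) + (C * B $ j) * wx t \<omega>
     + C * (wx t \<omega> * (wu t \<omega> \<bullet> column j D)) - B $ j * (wu t \<omega> \<bullet> kv) - (wu t \<omega> \<bullet> kv) * (wu t \<omega> \<bullet> column j D)" for j \<omega>
    unfolding \<beta>_def cc_def by (simp add: algebra_simps)
  have ibc: "integrable M (\<lambda>\<omega>. \<beta> \<omega> * cc j \<omega>)" for j
    unfolding bceq using aw[of "column j D"] by (simp add: wx_int w_mom)
  have mbc[measurable]: "(\<lambda>\<omega>. \<beta> \<omega> * cc j \<omega>) \<in> borel_measurable (sig J01)" for j
    unfolding \<beta>_def cc_def by measurable
  have ixbc: "integrable M (\<lambda>\<omega>. X t \<omega> * (\<beta> \<omega> * cc j \<omega>))" for j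
    using indep2[OF subs(6) subs(1) disj(1), where X = "X t" and Y = "\<lambda>\<omega>. \<beta> \<omega> * cc j \<omega>"]
      ix ibc by simp
  have mxbc[measurable]: "(\<lambda>\<omega>. X t \<omega> * (\<beta> \<omega> * cc j \<omega>)) \<in> borel_measurable (sig JP)" for j
    unfolding \<beta>_def cc_def by measurable
  have tj: "integrable M (\<lambda>\<omega>. X t \<omega> * (\<beta> \<omega> * cc j \<omega>) * xi t \<omega> $ j) \<and>
      (\<integral>\<omega>. X t \<omega> * (\<beta> \<omega> * cc j \<omega>) * xi t \<omega> $ j \<partial>M) = 0" for j
    using indep2[OF subs(5) subs(4) disj(2), where X = "\<lambda>\<omega>. X t \<omega> * (\<beta> \<omega> * cc j \<omega>)" and Y = "\<lambda>\<omega>. xi t \<omega> $ j"]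
      ixbc xi_comp by simp
  have xbe_eq: "X t \<omega> * \<beta> \<omega> * \<eta> \<omega> = (\<Sum>j\<in>UNIV. X t \<omega> * (\<beta> \<omega> * cc j \<omega>) * xi t \<omega> $ j)" for \<omega>
    unfolding eta_sum sum_distrib_left by (simp add: mult.assoc)
  have ixbe: "integrable M (\<lambda>\<omega>. X t \<omega> * \<beta> \<omega> * \<eta> \<omega>)" and exbe: "(\<integral>\<omega>. X t \<omega> * \<beta> \<omega> * \<eta> \<omega> \<partial>M) = 0"
    unfolding xbe_eq using tj by (auto simp: integral_sum)
  \<comment> \<open>eta squared\<close>
  have mvi: "(D *v v) $ i = v \<bullet> D $ i" for v :: "real^'n" and i
    by (simp add: matrix_vector_mult_def inner_vec_def mult.commute)
  have eta2: "\<eta> \<omega> = xi t \<omega> \<bullet> B + (\<Sum>i\<in>UNIV. wu t \<omega> $ i * (xi t \<omega> \<bullet> D $ i))" for \<omega>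
  proof -
    have "\<eta> \<omega> = B \<bullet> xi t \<omega> + wu t \<omega> \<bullet> (D *v xi t \<omega>)"
      unfolding \<eta>_def by (simp add: inner_add_left dot_lmul_matrix)
    then show ?thesis by (simp add: inner_vec_def[of "wu t \<omega>"] mvi inner_commute)
  qed
  have e2eq: "(\<eta> \<omega>)^2 = (xi t \<omega> \<bullet> B) * (xi t \<omega> \<bullet> B)
      + 2 * (\<Sum>i\<in>UNIV. wu t \<omega> $ i * ((xi t \<omega> \<bullet> B) * (xi t \<omega> \<bullet> D $ i)))
      + (\<Sum>i\<in>UNIV. \<Sum>k\<in>UNIV. (wu t \<omega> $ i * wu t \<omega> $ k) * ((xi t \<omega> \<bullet> D $ i) * (xi t \<omega> \<bullet> D $ k)))" for \<omega>
    unfolding eta2 power2_eq_square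
    by (simp add: distrib_left distrib_right sum_distrib_left sum_distrib_right sum_product sum.distrib algebra_simps)
  have c1: "integrable M (\<lambda>\<omega>. wu t \<omega> $ i * ((xi t \<omega> \<bullet> B) * (xi t \<omega> \<bullet> D $ i))) \<and>
      (\<integral>\<omega>. wu t \<omega> $ i * ((xi t \<omega> \<bullet> B) * (xi t \<omega> \<bullet> D $ i)) \<partial>M) = 0" for i
    using indep2[OF subs(3) subs(4) disj(4), where X = "\<lambda>\<omega>. wu t \<omega> $ i" and Y = "\<lambda>\<omega>. (xi t \<omega> \<bullet> B) * (xi t \<omega> \<bullet> D $ i)"]
    by (simp add: wu_int wu_mom xi_mom)
  have c2: "integrable M (\<lambda>\<omega>. (wu t \<omega> $ i * wu t \<omega> $ k) * ((xi t \<omega> \<bullet> D $ i) * (xi t \<omega> \<bullet> D $ k))) \<and>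
      (\<integral>\<omega>. (wu t \<omega> $ i * wu t \<omega> $ k) * ((xi t \<omega> \<bullet> D $ i) * (xi t \<omega> \<bullet> D $ k)) \<partial>M)
        = (if i = k then 1 else 0) * (D $ i \<bullet> (S *v D $ k))" for i k
    using indep2[OF subs(3) subs(4) disj(4), where X = "\<lambda>\<omega>. wu t \<omega> $ i * wu t \<omega> $ k" and Y = "\<lambda>\<omega>. (xi t \<omega> \<bullet> D $ i) * (xi t \<omega> \<bullet> D $ k)"]
    by (simp add: wu_int wu_mom xi_mom del: mult_if_delta)
  have ie2: "integrable M (\<lambda>\<omega>. (\<eta> \<omega>)^2)"
    unfolding e2eq using c1 c2 by (simp add: xi_mom)
  have ee2: "(\<integral>\<omega>. (\<eta> \<omega>)^2 \<partial>M) = sqv"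
  proof -
    have "(\<integral>\<omega>. (\<eta> \<omega>)^2 \<partial>M) = B \<bullet> (S *v B) + 2 * (\<Sum>i\<in>(UNIV::'n set). 0)
        + (\<Sum>i\<in>UNIV. \<Sum>k\<in>UNIV. (if i = k then 1 else 0) * (D $ i \<bullet> (S *v D $ k)))"
      unfolding e2eq using c1 c2 xi_mom by (simp add: integral_sum integrable_sum del: mult_if_delta)
    also have "\<dots> = sqv" unfolding sqv_def by (simp add: if_distrib[where f="\<lambda>z. z * _"] cong: if_cong)
    finally show ?thesis .
  qed
  have Xeq: "(X (Suc t) \<omega>)^2 = (X t \<omega>)^2 * (\<beta> \<omega>)^2 + 2 * (X t \<omega> * \<beta> \<omega> * \<eta> \<omega>) + (\<eta> \<omega>)^2" for \<omega>
    unfolding X_Suc \<beta>_def[symmetric] \<eta>_def[symmetric] by (simp add: power2_eq_square algebra_simps)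
  show ?thesis unfolding Xeq using xb ixbe exbe ie2 ee2 by (simp add: mult.commute)
qed

end

lemma AE_summable_from_int:
  fixes f :: "nat \<Rightarrow> 'a \<Rightarrow> real"
  assumes int: "\<And>i. integrable M (f i)" and sm: "summable (\<lambda>i. \<integral>x. \<bar>f i x\<bar> \<partial>M)"
  shows "AE x in M. summable (\<lambda>i. \<bar>f i x\<bar>)"
proof -
  have m[measurable]: "f i \<in> borel_measurable M" for i using int by auto
  have "(\<integral>\<^sup>+x. (\<Sum>i. ennreal \<bar>f i x\<bar>) \<partial>M) = (\<Sum>i. \<integral>\<^sup>+x. ennreal \<bar>f i x\<bar> \<partial>M)"
    by (rule nn_integral_suminf) measurable
  also have "\<dots> = (\<Sum>i. ennreal (\<integral>x. \<bar>f i x\<bar> \<partial>M))"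
    by (intro suminf_cong nn_integral_eq_integral) (auto simp: int)
  also have "\<dots> = ennreal (\<Sum>i. \<integral>x. \<bar>f i x\<bar> \<partial>M)"
    by (rule suminf_ennreal2) (auto simp: sm)
  finally have "(\<integral>\<^sup>+x. (\<Sum>i. ennreal \<bar>f i x\<bar>) \<partial>M) \<noteq> \<infinity>" by simp
  then have "AE x in M. (\<Sum>i. ennreal \<bar>f i x\<bar>) \<noteq> \<infinity>"
    by (intro nn_integral_PInf_AE) measurable
  then show ?thesis
    by eventually_elim (rule summable_suminf_not_top, auto)
qed

context lqr
begin

definition mm :: "nat \<Rightarrow> real" where "mm t = (\<integral>\<omega>. (X t \<omega>)^2 \<partial>M)"

lemma X2_int: "integrable M (\<lambda>\<omega>. (X t \<omega>)^2)"
proof (induction t)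
  case 0
  then show ?case by simp
next
  case (Suc t)
  then show ?case using step by blast
qed

lemma mm_Suc: "mm (Suc t) = V_K A C B D K * mm t + sqv"
  unfolding mm_def using step[OF X2_int] by simp

lemma mm_0: "mm 0 = x0^2"
  unfolding mm_def by (simp add: prob_space)

lemma mm_nonneg: "mm t \<ge> 0" unfolding mm_def by simp

lemma Vk_nonneg: "V_K A C B D K \<ge> 0" unfolding Vk_eq by simp

lemma S_nonneg: "v \<bullet> (S *v v) \<ge> 0"
  using SP unfolding sym_posdef_def by (cases "v = 0") (auto intro: less_imp_le)

lemma sqv_nonneg: "sqv \<ge> 0"
  unfolding sqv_def by (intro add_nonneg_nonneg sum_nonneg S_nonneg)

lemma mm_summable:
  fixes \<gamma> :: real
  assumes g: "0 < \<gamma>" "\<gamma> < 1" and gV: "\<gamma> * V_K A C B D K < 1"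
  shows "summable (\<lambda>t. \<gamma>^t * mm t)"
    "(\<Sum>t. \<gamma>^t * mm t) = (x0^2 + \<gamma> * sqv / (1 - \<gamma>)) / (1 - \<gamma> * V_K A C B D K)"
proof -
  let ?V = "V_K A C B D K"
  define Bd where "Bd = (x0^2 + \<gamma> * sqv / (1 - \<gamma>)) / (1 - \<gamma> * ?V)"
  have Bd_eq: "Bd = x0^2 + \<gamma> * ?V * Bd + \<gamma> * sqv / (1 - \<gamma>)"
  proof -
    have "1 - \<gamma> \<noteq> 0" "1 - \<gamma> * ?V \<noteq> 0" using g gV by auto
    then have "Bd * (1 - \<gamma> * ?V) = x0^2 + \<gamma> * sqv / (1 - \<gamma>)" unfolding Bd_def by simp
    then show ?thesis by (simp add: algebra_simps)
  qed
  have geo: "(\<Sum>i<n. \<gamma>^i) \<le> 1 / (1 - \<gamma>)" for n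
  proof -
    have "(\<Sum>i<n. \<gamma>^i) = (1 - \<gamma>^n) / (1 - \<gamma>)" using g by (simp add: sum_gp_strict)
    also have "\<dots> \<le> 1 / (1 - \<gamma>)" using g by (intro divide_right_mono) auto
    finally show ?thesis .
  qed
  have shift: "(\<Sum>t<Suc n. \<gamma>^t * mm t) = x0^2 + \<gamma> * ?V * (\<Sum>t<n. \<gamma>^t * mm t) + \<gamma> * sqv * (\<Sum>t<n. \<gamma>^t)" for n
    unfolding sum.lessThan_Suc_shift mm_0 mm_Suc
    by (simp add: sum_distrib_left sum.distrib algebra_simps)
  have bnd: "(\<Sum>t<n. \<gamma>^t * mm t) \<le> Bd" for n
  proof (induction n)
    case 0
    have "0 \<le> Bd" unfolding Bd_def using g gV sqv_nonneg by (intro divide_nonneg_pos add_nonneg_nonneg) auto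
    then show ?case by simp
  next
    case (Suc n)
    have "(\<Sum>t<Suc n. \<gamma>^t * mm t) = x0^2 + \<gamma> * ?V * (\<Sum>t<n. \<gamma>^t * mm t) + \<gamma> * sqv * (\<Sum>t<n. \<gamma>^t)"
      by (rule shift)
    also have "\<dots> \<le> x0^2 + \<gamma> * ?V * Bd + \<gamma> * sqv * (1 / (1 - \<gamma>))"
      using Suc g Vk_nonneg sqv_nonneg geo[of n]
      by (intro add_mono mult_left_mono order_refl) auto
    also have "\<dots> = Bd" using Bd_eq by simp
    finally show ?case .
  qed
  show sm: "summable (\<lambda>t. \<gamma>^t * mm t)"
    by (rule summableI_nonneg_bounded[where x = Bd]) (use g mm_nonneg bnd in auto)
  let ?Ms = "\<Sum>t. \<gamma>^t * mm t"
  have sg: "summable (\<lambda>t. \<gamma>^t)" using g by (intro summable_geometric) simp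
  have "(\<Sum>t. \<gamma>^Suc t * mm (Suc t)) = (\<Sum>t. (\<gamma> * ?V) * (\<gamma>^t * mm t) + (\<gamma> * sqv) * \<gamma>^t)"
    by (simp add: mm_Suc algebra_simps)
  also have "\<dots> = (\<gamma> * ?V) * ?Ms + (\<gamma> * sqv) * (\<Sum>t. \<gamma>^t)"
    using sm sg by (subst suminf_add[symmetric]) (auto simp: suminf_mult intro: summable_mult)
  also have "(\<Sum>t. \<gamma>^t) = 1 / (1 - \<gamma>)" using g by (intro suminf_geometric) simp
  finally have "?Ms - x0^2 = (\<gamma> * ?V) * ?Ms + (\<gamma> * sqv) * (1 / (1 - \<gamma>))"
    using suminf_split_head[OF sm] mm_0 by simp
  then have "?Ms * (1 - \<gamma> * ?V) = x0^2 + \<gamma> * sqv / (1 - \<gamma>)" by (simp add: algebra_simps)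
  then show "?Ms = (x0^2 + \<gamma> * sqv / (1 - \<gamma>)) / (1 - \<gamma> * ?V)"
    using gV by (simp add: field_simps)
qed

end

lemma trace_sqv_aux:
  fixes S D :: "real^'n^'n" and B :: "real^'n"
  assumes ST: "transpose S = S"
  shows "trace (S ** (outer B B + transpose D ** D)) = B \<bullet> (S *v B) + (\<Sum>i\<in>UNIV. D $ i \<bullet> (S *v D $ i))"
proof -
  have Ssym: "S $ j $ i = S $ i $ j" for i j using ST by (metis transpose_def vec_lambda_beta)
  have 1: "trace (S ** outer B B) = B \<bullet> (S *v B)"
    by (simp add: trace_def matrix_matrix_mult_def outer_def inner_vec_def matrix_vector_mult_def
        sum_distrib_left mult_ac)
  have a: "trace (S ** (transpose D ** D)) = (\<Sum>i\<in>UNIV. \<Sum>j\<in>UNIV. \<Sum>k\<in>UNIV. S $ i $ j * (D $ k $ j * D $ k $ i))"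
    by (simp add: trace_def matrix_matrix_mult_def transpose_def sum_distrib_left)
  have b: "(\<Sum>k\<in>UNIV. D $ k \<bullet> (S *v D $ k)) = (\<Sum>k\<in>UNIV. \<Sum>i\<in>UNIV. \<Sum>j\<in>UNIV. D $ k $ i * (S $ i $ j * D $ k $ j))"
    by (simp add: inner_vec_def matrix_vector_mult_def sum_distrib_left)
  have c: "(\<Sum>i\<in>UNIV. \<Sum>j\<in>UNIV. \<Sum>k\<in>UNIV. f i j k) = (\<Sum>k\<in>UNIV. \<Sum>i\<in>UNIV. \<Sum>j\<in>UNIV. f i j k)"
    for f :: "'n \<Rightarrow> 'n \<Rightarrow> 'n \<Rightarrow> real"
  proof -
    have "(\<Sum>i\<in>UNIV. \<Sum>j\<in>UNIV. \<Sum>k\<in>UNIV. f i j k) = (\<Sum>i\<in>UNIV. \<Sum>k\<in>UNIV. \<Sum>j\<in>UNIV. f i j k)"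
      by (intro sum.cong refl sum.swap)
    also have "\<dots> = (\<Sum>k\<in>UNIV. \<Sum>i\<in>UNIV. \<Sum>j\<in>UNIV. f i j k)" by (rule sum.swap)
    finally show ?thesis .
  qed
  have "trace (S ** (transpose D ** D)) = (\<Sum>k\<in>UNIV. \<Sum>i\<in>UNIV. \<Sum>j\<in>UNIV. S $ i $ j * (D $ k $ j * D $ k $ i))"
    unfolding a by (rule c)
  also have "\<dots> = (\<Sum>k\<in>UNIV. D $ k \<bullet> (S *v D $ k))"
    unfolding b by (intro sum.cong refl) (simp add: mult_ac)
  finally have 2: "trace (S ** (transpose D ** D)) = (\<Sum>k\<in>UNIV. D $ k \<bullet> (S *v D $ k))" .
  show ?thesis by (simp add: matrix_add_ldistrib trace_add 1 2)
qed

context lqr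
begin

lemma ST: "transpose S = S" using SP unfolding sym_posdef_def by auto

lemma trace_sqv: "trace (S ** (outer B B + transpose D ** D)) = sqv"
  unfolding sqv_def by (rule trace_sqv_aux[OF ST])

lemma xi_qf: "integrable M (\<lambda>\<omega>. xi t \<omega> \<bullet> (Rm *v xi t \<omega>))" "(\<integral>\<omega>. xi t \<omega> \<bullet> (Rm *v xi t \<omega>) \<partial>M) = trace (S ** Rm)"
proof -
  have Ssym: "S $ j $ i = S $ i $ j" for i j using ST by (metis transpose_def vec_lambda_beta)
  have eq: "v \<bullet> (Rm *v v) = (\<Sum>i\<in>UNIV. (v \<bullet> axis i 1) * (v \<bullet> Rm $ i))" for v :: "real^'n"
  proof -
    have mvi: "(Rm *v v) $ i = v \<bullet> Rm $ i" for i by (simp add: matrix_vector_mult_def inner_vec_def mult.commute)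
    show ?thesis by (simp add: inner_vec_def[of v "Rm *v v"] mvi inner_axis)
  qed
  show "integrable M (\<lambda>\<omega>. xi t \<omega> \<bullet> (Rm *v xi t \<omega>))" unfolding eq using xi_mom by simp
  have "(\<integral>\<omega>. xi t \<omega> \<bullet> (Rm *v xi t \<omega>) \<partial>M) = (\<Sum>i\<in>UNIV. axis i 1 \<bullet> (S *v Rm $ i))"
    unfolding eq using xi_mom by (simp add: integral_sum)
  also have "\<dots> = (\<Sum>i\<in>UNIV. \<Sum>j\<in>UNIV. S $ i $ j * Rm $ i $ j)"
    by (simp add: inner_axis' matrix_vector_mult_def)
  also have "\<dots> = (\<Sum>j\<in>UNIV. \<Sum>i\<in>UNIV. S $ i $ j * Rm $ i $ j)" by (rule sum.swap)
  also have "\<dots> = trace (S ** Rm)"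
    by (simp add: trace_def matrix_matrix_mult_def Ssym)
  finally show "(\<integral>\<omega>. xi t \<omega> \<bullet> (Rm *v xi t \<omega>) \<partial>M) = trace (S ** Rm)" .
qed

lemma x_xi: "integrable M (\<lambda>\<omega>. X t \<omega> * (xi t \<omega> \<bullet> c)) \<and> (\<integral>\<omega>. X t \<omega> * (xi t \<omega> \<bullet> c) \<partial>M) = 0"
proof -
  have s: "PJ t \<subseteq> UNIV \<times> {0,1,2}" "{(t,2)} \<subseteq> UNIV \<times> {0,1,2}" "PJ t \<inter> {(t,2)} = {}"
    by (auto simp: PJ_def)
  have [measurable]: "xi t \<in> borel_measurable (sig {(t,2)})" by (auto intro!: xi_sig)
  have [measurable]: "X t \<in> borel_measurable (sig (PJ t))" by (rule X_meas)
  have ix: "integrable M (X t)" by (rule sq_integrable_imp[OF X2_int]) measurable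
  show ?thesis using indep2[OF s, where X = "X t" and Y = "\<lambda>\<omega>. xi t \<omega> \<bullet> c"] ix xi_mom by simp
qed

end

lemma qf_bound:
  fixes v :: "real^'n" and Rm :: "real^'n^'n"
  shows "\<bar>v \<bullet> (Rm *v v)\<bar> \<le> (\<Sum>i\<in>UNIV. \<Sum>j\<in>UNIV. \<bar>Rm $ i $ j\<bar>) * (v \<bullet> v)"
proof -
  have eq: "v \<bullet> (Rm *v v) = (\<Sum>i\<in>UNIV. \<Sum>j\<in>UNIV. Rm $ i $ j * (v $ i * v $ j))"
    by (simp add: inner_vec_def matrix_vector_mult_def sum_distrib_left mult_ac)
  have pij: "\<bar>v $ i\<bar> * \<bar>v $ j\<bar> \<le> v \<bullet> v" for i j
  proof -
    have "\<bar>v $ i\<bar> * \<bar>v $ j\<bar> \<le> norm v * norm v" by (intro mult_mono component_le_norm_cart) auto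
    also have "\<dots> = v \<bullet> v" by (simp add: power2_norm_eq_inner[symmetric] power2_eq_square)
    finally show ?thesis .
  qed
  have "\<bar>v \<bullet> (Rm *v v)\<bar> \<le> (\<Sum>i\<in>UNIV. \<Sum>j\<in>UNIV. \<bar>Rm $ i $ j * (v $ i * v $ j)\<bar>)"
    unfolding eq by (rule order_trans[OF sum_abs sum_mono[OF sum_abs]])
  also have "\<dots> \<le> (\<Sum>i\<in>UNIV. \<Sum>j\<in>UNIV. \<bar>Rm $ i $ j\<bar> * (v \<bullet> v))"
    unfolding abs_mult by (intro sum_mono mult_left_mono pij) auto
  also have "\<dots> = (\<Sum>i\<in>UNIV. \<Sum>j\<in>UNIV. \<bar>Rm $ i $ j\<bar>) * (v \<bullet> v)"
    by (simp add: sum_distrib_right)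
  finally show ?thesis .
qed

lemma diff_sq_bound:
  fixes a b :: "real^'n"
  shows "(a - b) \<bullet> (a - b) \<le> 2 * (a \<bullet> a) + 2 * (b \<bullet> b)"
proof -
  have "0 \<le> (a + b) \<bullet> (a + b)" by simp
  then show ?thesis by (simp add: inner_diff_left inner_diff_right inner_add_left inner_add_right inner_commute)
qed

context lqr
begin

definition gt :: "real \<Rightarrow> real^'n^'n \<Rightarrow> real \<Rightarrow> nat \<Rightarrow> 'a \<Rightarrow> real" where
  "gt Q R \<tau> t \<omega> = (let x = X t \<omega>; u = ctrl_input A C B D K wx wu xi x0 t \<omega>
     in Q * x^2 + u \<bullet> (R *v u) + \<tau> * ln (gauss_pdf S (- (x *\<^sub>R K)) u))"

definition "Zc = (2 * pi) ^ CARD('n) * det S"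

lemma Zc_pos: "Zc > 0"
  unfolding Zc_def using gauss_det_pos[OF prob_space_axioms xi_gauss[of 0]] by simp

lemma gt_eq: "gt Q R \<tau> t \<omega> = Q * (X t \<omega>)^2 + (xi t \<omega> - X t \<omega> *\<^sub>R K) \<bullet> (R *v (xi t \<omega> - X t \<omega> *\<^sub>R K))
   - \<tau> / 2 * (xi t \<omega> \<bullet> (matrix_inv S *v xi t \<omega>)) - \<tau> / 2 * ln Zc"
proof -
  have e: "ln (gauss_pdf S (- (X t \<omega> *\<^sub>R K)) (xi t \<omega> - X t \<omega> *\<^sub>R K))
      = - (1/2) * (xi t \<omega> \<bullet> (matrix_inv S *v xi t \<omega>)) - ln Zc / 2"
    unfolding gauss_pdf_def Zc_def[symmetric] using Zc_pos by (simp add: ln_div ln_sqrt)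
  show ?thesis unfolding gt_def ctrl_input_def Let_def e by (simp add: algebra_simps)
qed

lemma gt_eq2: "gt Q R \<tau> t \<omega> = Q * (X t \<omega>)^2 + xi t \<omega> \<bullet> (R *v xi t \<omega>)
   - X t \<omega> * (xi t \<omega> \<bullet> (R *v K)) - X t \<omega> * (xi t \<omega> \<bullet> (K v* R)) + (X t \<omega>)^2 * (K \<bullet> (R *v K))
   - \<tau> / 2 * (xi t \<omega> \<bullet> (matrix_inv S *v xi t \<omega>)) - \<tau> / 2 * ln Zc"
proof -
  have "K \<bullet> (R *v xi t \<omega>) = xi t \<omega> \<bullet> (K v* R)"
    by (simp add: dot_lmul_matrix[symmetric] inner_commute)
  then show ?thesis unfolding gt_eq
    by (simp add: matrix_vector_mult_diff_distrib matrix_vector_mult_scaleR inner_diff_left inner_diff_right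
        power2_eq_square algebra_simps)
qed

lemma gt_int: "integrable M (gt Q R \<tau> t)"
  unfolding gt_eq2[abs_def] using X2_int xi_qf x_xi by simp

lemma gt_E: "(\<integral>\<omega>. gt Q R \<tau> t \<omega> \<partial>M) = (Q + K \<bullet> (R *v K)) * mm t + (trace (S ** R) - \<tau> / 2 * (real CARD('n) + ln Zc))"
proof -
  have tr: "trace (S ** matrix_inv S) = real CARD('n)" by (simp add: posdef_inv(1)[OF SP] trace_I)
  show ?thesis
    unfolding gt_eq2[abs_def] using X2_int xi_qf x_xi
    by (simp add: prob_space mm_def tr algebra_simps)
qed

end

context lqr
begin

definition "cR R = (\<Sum>i\<in>UNIV. \<Sum>j\<in>UNIV. \<bar>(R::real^'n^'n) $ i $ j\<bar>)"

lemma gt_bound: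
  assumes tau: "0 \<le> \<tau>"
  shows "\<bar>gt Q R \<tau> t \<omega>\<bar> \<le> (\<bar>Q\<bar> + 2 * cR R * (K \<bullet> K)) * (X t \<omega>)^2
     + (2 * cR R + \<tau> / 2 * cR (matrix_inv S)) * (xi t \<omega> \<bullet> xi t \<omega>) + \<tau> / 2 * \<bar>ln Zc\<bar>"
proof -
  let ?x = "X t \<omega>" and ?v = "xi t \<omega>"
  let ?u = "?v - ?x *\<^sub>R K"
  have cR0: "0 \<le> cR Rm" for Rm unfolding cR_def by (intro sum_nonneg) auto
  have u1: "\<bar>?u \<bullet> (R *v ?u)\<bar> \<le> cR R * (?u \<bullet> ?u)" unfolding cR_def by (rule qf_bound)
  have u2: "?u \<bullet> ?u \<le> 2 * (?v \<bullet> ?v) + 2 * (?x^2 * (K \<bullet> K))"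
    using diff_sq_bound[of ?v "?x *\<^sub>R K"] by (simp add: power2_eq_square)
  have u3: "\<bar>?u \<bullet> (R *v ?u)\<bar> \<le> cR R * (2 * (?v \<bullet> ?v) + 2 * (?x^2 * (K \<bullet> K)))"
    using u1 mult_left_mono[OF u2 cR0[of R]] by linarith
  have g1: "\<bar>?v \<bullet> (matrix_inv S *v ?v)\<bar> \<le> cR (matrix_inv S) * (?v \<bullet> ?v)" unfolding cR_def by (rule qf_bound)
  have g2: "\<bar>\<tau> / 2 * (?v \<bullet> (matrix_inv S *v ?v))\<bar> \<le> \<tau> / 2 * (cR (matrix_inv S) * (?v \<bullet> ?v))"
    using tau g1 by (simp add: abs_mult mult_left_mono)
  have g3: "\<bar>\<tau> / 2 * ln Zc\<bar> = \<tau> / 2 * \<bar>ln Zc\<bar>" using tau by (simp add: abs_mult)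
  have "\<bar>gt Q R \<tau> t \<omega>\<bar> \<le> \<bar>Q * ?x^2\<bar> + \<bar>?u \<bullet> (R *v ?u)\<bar> + \<bar>\<tau> / 2 * (?v \<bullet> (matrix_inv S *v ?v))\<bar> + \<bar>\<tau> / 2 * ln Zc\<bar>"
    unfolding gt_eq by linarith
  also have "\<dots> \<le> \<bar>Q\<bar> * ?x^2 + cR R * (2 * (?v \<bullet> ?v) + 2 * (?x^2 * (K \<bullet> K))) + \<tau> / 2 * (cR (matrix_inv S) * (?v \<bullet> ?v)) + \<tau> / 2 * \<bar>ln Zc\<bar>"
  proof -
    have q: "\<bar>Q * ?x^2\<bar> = \<bar>Q\<bar> * ?x^2" by (simp add: abs_mult)
    show ?thesis using u3 g2 g3 q by linarith
  qed
  also have "\<dots> = (\<bar>Q\<bar> + 2 * cR R * (K \<bullet> K)) * ?x^2 + (2 * cR R + \<tau> / 2 * cR (matrix_inv S)) * (?v \<bullet> ?v) + \<tau> / 2 * \<bar>ln Zc\<bar>"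
    by (simp add: algebra_simps)
  finally show ?thesis .
qed

lemma cost_value:
  fixes \<gamma> \<tau> Q :: real and R :: "real^'n^'n"
  assumes g: "0 < \<gamma>" "\<gamma> < 1" and tau: "0 \<le> \<tau>" and gV: "\<gamma> * V_K A C B D K < 1"
  shows "ctrl_cost M A C B D Q R \<gamma> \<tau> K S wx wu xi x0
    = (Q + K \<bullet> (R *v K)) * ((x0^2 + \<gamma> * sqv / (1 - \<gamma>)) / (1 - \<gamma> * V_K A C B D K))
      + (trace (S ** R) - \<tau> / 2 * (real CARD('n) + ln Zc)) / (1 - \<gamma>)"
proof -
  define f where "f t \<omega> = \<gamma>^t * gt Q R \<tau> t \<omega>" for t \<omega>
  define c0 where "c0 = trace (S ** R) - \<tau> / 2 * (real CARD('n) + ln Zc)"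
  define b1 where "b1 = \<bar>Q\<bar> + 2 * cR R * (K \<bullet> K)"
  define b2 where "b2 = 2 * cR R + \<tau> / 2 * cR (matrix_inv S)"
  define b3 where "b3 = \<tau> / 2 * \<bar>ln Zc\<bar>"
  have cc: "ctrl_cost M A C B D Q R \<gamma> \<tau> K S wx wu xi x0 = (\<integral>\<omega>. (\<Sum>t. f t \<omega>) \<partial>M)"
    unfolding ctrl_cost_def f_def gt_def by simp
  have fint: "integrable M (f t)" for t unfolding f_def using gt_int by simp
  have vv: "integrable M (\<lambda>\<omega>. xi t \<omega> \<bullet> xi t \<omega>) \<and> (\<integral>\<omega>. xi t \<omega> \<bullet> xi t \<omega> \<partial>M) = trace S" for t
    using xi_qf[of t "mat 1"] by (simp add: matrix_vector_mul_lid)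
  have fabs: "(\<integral>\<omega>. \<bar>f t \<omega>\<bar> \<partial>M) \<le> \<gamma>^t * (b1 * mm t + b2 * trace S + b3)" for t
  proof -
    have "(\<integral>\<omega>. \<bar>f t \<omega>\<bar> \<partial>M) = \<gamma>^t * (\<integral>\<omega>. \<bar>gt Q R \<tau> t \<omega>\<bar> \<partial>M)"
      unfolding f_def using g by (simp add: abs_mult)
    also have "(\<integral>\<omega>. \<bar>gt Q R \<tau> t \<omega>\<bar> \<partial>M) \<le> (\<integral>\<omega>. b1 * (X t \<omega>)^2 + b2 * (xi t \<omega> \<bullet> xi t \<omega>) + b3 \<partial>M)"
      using gt_int X2_int vv gt_bound[OF tau] unfolding b1_def b2_def b3_def
      by (intro integral_mono) auto
    also have "\<dots> = b1 * mm t + b2 * trace S + b3"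
      using X2_int vv by (simp add: mm_def prob_space)
    finally show ?thesis using g by (simp add: mult_left_mono)
  qed
  have sh: "summable (\<lambda>t. \<gamma>^t * (b1 * mm t + b2 * trace S + b3))"
  proof -
    have "summable (\<lambda>t. b1 * (\<gamma>^t * mm t) + (b2 * trace S + b3) * \<gamma>^t)"
      using mm_summable(1)[OF g gV] g
      by (intro summable_add summable_mult summable_geometric) auto
    then show ?thesis by (simp add: algebra_simps)
  qed
  have sabs: "summable (\<lambda>t. \<integral>\<omega>. \<bar>f t \<omega>\<bar> \<partial>M)"
    by (rule summable_comparison_test'[OF sh, of 0]) (use fabs in auto)
  have ae: "AE \<omega> in M. summable (\<lambda>t. norm (f t \<omega>))"
    using AE_summable_from_int[OF fint sabs] by simp
  have "(\<integral>\<omega>. (\<Sum>t. f t \<omega>) \<partial>M) = (\<Sum>t. \<integral>\<omega>. f t \<omega> \<partial>M)"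
    by (rule integral_suminf[OF fint ae]) (use sabs in simp)
  also have "\<dots> = (\<Sum>t. (Q + K \<bullet> (R *v K)) * (\<gamma>^t * mm t) + c0 * \<gamma>^t)"
    unfolding f_def using gt_int by (simp add: gt_E c0_def algebra_simps)
  also have "\<dots> = (Q + K \<bullet> (R *v K)) * (\<Sum>t. \<gamma>^t * mm t) + c0 * (\<Sum>t. \<gamma>^t)"
    using mm_summable(1)[OF g gV] g
    by (subst suminf_add[symmetric]) (auto intro!: summable_mult summable_geometric simp: suminf_mult)
  also have "(\<Sum>t. \<gamma>^t) = 1 / (1 - \<gamma>)" using g by (intro suminf_geometric) simp
  finally show ?thesis unfolding cc mm_summable(2)[OF g gV] c0_def by simp
qed

end

context lqr
begin

lemma cost_value':
  fixes \<gamma> \<tau> Q :: real and R :: "real^'n^'n"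
  assumes g: "0 < \<gamma>" "\<gamma> < 1" and tau: "0 \<le> \<tau>" and gV: "\<gamma> * V_K A C B D K < 1"
  shows "ctrl_cost M A C B D Q R \<gamma> \<tau> K S wx wu xi x0
    = (Q + K \<bullet> (R *v K)) * ((x0^2 + \<gamma> * trace (S ** (outer B B + transpose D ** D)) / (1 - \<gamma>)) / (1 - \<gamma> * V_K A C B D K))
      + (trace (S ** R) - \<tau> / 2 * (real CARD('n) + ln ((2 * pi) ^ CARD('n) * det S))) / (1 - \<gamma>)"
  using cost_value[OF g tau gV, of Q R] unfolding trace_sqv Zc_def .

end

lemma trace_scale:
  fixes S M2 :: "real^'n^'n"
  shows "trace (S ** (c *\<^sub>R M2)) = c * trace (S ** M2)"
  by (simp add: trace_def matrix_matrix_mult_def sum_distrib_left mult_ac)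

theorem lemma2:
  fixes M :: "'a measure" and Dist :: "real measure"
    and A C Q \<gamma> \<tau> :: real and B :: "real^'n" and D R :: "real^'n^'n"
    and K :: "real^'n" and S :: "real^'n^'n"
    and wx :: "nat \<Rightarrow> 'a \<Rightarrow> real" and wu xi :: "nat \<Rightarrow> 'a \<Rightarrow> real^'n"
  assumes R_sym: "transpose R = R"
    and gamma: "0 < \<gamma>" "\<gamma> < 1" and tau: "0 < \<tau>"
    and Omega: "(K, S) \<in> Omega \<gamma> A C B D"
    and M: "prob_space M"
    and meas: "\<And>t. wx t \<in> borel_measurable M" "\<And>t. wu t \<in> borel_measurable M"
              "\<And>t. xi t \<in> borel_measurable M"
    and indep: "prob_space.indep_sets M (noise_events M wx wu xi) (UNIV \<times> {0, 1, 2})"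
    and wx_int: "\<And>t. integrable M (wx t)" "\<And>t. integrable M (\<lambda>\<omega>. (wx t \<omega>)^2)"
    and wx_mom: "\<And>t. integral\<^sup>L M (wx t) = 0" "\<And>t. integral\<^sup>L M (\<lambda>\<omega>. (wx t \<omega>)^2) = 1"
    and wu_int: "\<And>t i. integrable M (\<lambda>\<omega>. wu t \<omega> $ i)"
                "\<And>t i j. integrable M (\<lambda>\<omega>. wu t \<omega> $ i * wu t \<omega> $ j)"
    and wu_mom: "\<And>t i. integral\<^sup>L M (\<lambda>\<omega>. wu t \<omega> $ i) = 0"
                "\<And>t i j. integral\<^sup>L M (\<lambda>\<omega>. wu t \<omega> $ i * wu t \<omega> $ j) = (if i = j then 1 else 0)"
    and xi_gauss: "\<And>t. distributed M lborel (xi t) (\<lambda>u. ennreal (gauss_pdf S 0 u))"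
    and Dist: "prob_space Dist" "sets Dist = sets borel" "integrable Dist (\<lambda>x. x^2)"
  shows "(\<exists>!P. P = Q + K \<bullet> (R *v K) + \<gamma> * P * V_K A C B D K) \<and>
         (\<forall>P. P = Q + K \<bullet> (R *v K) + \<gamma> * P * V_K A C B D K \<longrightarrow>
            integral\<^sup>L Dist (\<lambda>x0. ctrl_cost M A C B D Q R \<gamma> \<tau> K S wx wu xi x0)
            = P * integral\<^sup>L Dist (\<lambda>x. x^2)
              + (trace (S ** (R + (\<gamma> * P) *\<^sub>R (outer B B + transpose D ** D)))
                 - \<tau> / 2 * (real CARD('n) + ln ((2 * pi) ^ CARD('n) * det S))) / (1 - \<gamma>))"
proof -
  let ?V = "V_K A C B D K"
  let ?c = "Q + K \<bullet> (R *v K)"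
  have SP: "sym_posdef S" and gV: "\<gamma> * ?V < 1" using Omega unfolding Omega_def by auto
  define P0 where "P0 = ?c / (1 - \<gamma> * ?V)"
  have Peq: "P = ?c + \<gamma> * P * ?V \<longleftrightarrow> P = P0" for P
  proof -
    have "P = ?c + \<gamma> * P * ?V \<longleftrightarrow> P * (1 - \<gamma> * ?V) = ?c" by (auto simp: algebra_simps)
    also have "\<dots> \<longleftrightarrow> P = P0" unfolding P0_def using gV by (auto simp: field_simps)
    finally show ?thesis .
  qed
  define q where "q = (trace (S ** (R + (\<gamma> * P0) *\<^sub>R (outer B B + transpose D ** D)))
                 - \<tau> / 2 * (real CARD('n) + ln ((2 * pi) ^ CARD('n) * det S))) / (1 - \<gamma>)"
  have cost: "ctrl_cost M A C B D Q R \<gamma> \<tau> K S wx wu xi x0 = P0 * x0^2 + q" for x0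
  proof -
    interpret lqr M wx wu xi A C B D K S x0
      by (rule lqr.intro[OF noisy.intro[OF M noisy_axioms.intro[OF meas indep]]
            lqr_axioms.intro[OF SP wx_int wx_mom wu_int wu_mom xi_gauss]])
    let ?Mx = "outer B B + transpose D ** D"
    let ?E = "\<tau> / 2 * (real CARD('n) + ln ((2 * pi) ^ CARD('n) * det S))"
    have tr: "trace (S ** (R + (\<gamma> * P0) *\<^sub>R ?Mx)) = trace (S ** R) + \<gamma> * P0 * trace (S ** ?Mx)"
      by (simp add: matrix_add_ldistrib trace_add trace_scale)
    have alg: "c * ((x + \<gamma> * T / e) / d) + (r - E) / e = c / d * x + (r + \<gamma> * (c / d) * T - E) / e"
      if "d \<noteq> 0" "e \<noteq> 0" for c x T e d r E :: real
      using that by (simp add: field_simps)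
    have ne: "1 - \<gamma> * ?V \<noteq> 0" "1 - \<gamma> \<noteq> 0" using gamma gV by auto
    show ?thesis unfolding cost_value'[OF gamma less_imp_le[OF tau] gV, of Q R] q_def tr
      unfolding P0_def by (rule alg[OF ne])
  qed
  have int: "integral\<^sup>L Dist (\<lambda>x0. ctrl_cost M A C B D Q R \<gamma> \<tau> K S wx wu xi x0) = P0 * integral\<^sup>L Dist (\<lambda>x. x^2) + q"
  proof -
    interpret D: prob_space Dist by (rule Dist(1))
    show ?thesis unfolding cost using Dist(3) by (simp add: D.prob_space)
  qed
  show ?thesis
    unfolding Peq using int q_def by auto
qed


end
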